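(* Let $U\trianglelefteq S\le W$ and $R=(U\times U)\langle\sigma\rangle\{(s,s):s\in S\}$. Then \[N_W(R)=(V\times V)\langle\sigma\rangle\{(t,t):t\in T\},\] where $V=\Omega(S,U)$ and $T=N_W(U)\cap N_W(S)$. Furthermore $V$ is a normal subgroup of $T$, $[V\times V,R]\le(U\times U)\{(v,v):v\in V\}$, the quotient $V/U$ is a $T/S$-module, and $N_W(R)/R\cong(V/U)(T/S)$.
   Context: $W$ is the isometry group of the binary rooted tree $\{0,1\}^*$. Elements are written $(g_0,g_1)\pi$ with $\pi\in\mathrm{Sym}(\{0,1\})$, meaning $(xw)\mapsto x^\pi w^{g_x}$; $\sigma$ is the isometry swapping the two subtrees at the root rigidly; $U\times U=\{(u,u'):u,u'\in U\}$. For groups $K\trianglelefteq G$, $\Omega(G,K)=\{v\in G: v^2\in K\text{ and }[G,v]\le K\}$. The notation $(V/U)(T/S)$ denotes a product of (a group isomorphic to) $V/U$ with (a group isomorphic to) $T/S$, as in the paper. *)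

theory Defs
  imports "HOL-Algebra.Algebra"
begin

text \<open>Vertices of the binary rooted tree are words over the alphabet bool
  (False = 0, True = 1).\<close>

definition tree_isom :: "(bool list \<Rightarrow> bool list) \<Rightarrow> bool" where
  "tree_isom f \<longleftrightarrow> bij f \<and> (\<forall>w. length (f w) = length w)
      \<and> (\<forall>w k. f (take k w) = take k (f w))"

text \<open>The group W, acting on the right: w^(g h) = (w^g)^h, so the product
  g h is the function "first g, then h".\<close>

definition W :: "(bool list \<Rightarrow> bool list) monoid" where
  "W = \<lparr>carrier = {f. tree_isom f}, monoid.mult = (\<lambda>g h. h \<circ> g), one = id\<rparr>"

definition tpair :: "(bool list \<Rightarrow> bool list) \<Rightarrow> (bool list \<Rightarrow> bool list)
    \<Rightarrow> bool list \<Rightarrow> bool list" where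
  "tpair g0 g1 w = (case w of [] \<Rightarrow> [] | x # v \<Rightarrow> x # (if x then g1 v else g0 v))"

definition sigma :: "bool list \<Rightarrow> bool list" where
  "sigma w = (case w of [] \<Rightarrow> [] | x # v \<Rightarrow> (\<not> x) # v)"

definition prodset :: "(bool list \<Rightarrow> bool list) set \<Rightarrow> (bool list \<Rightarrow> bool list) set
    \<Rightarrow> (bool list \<Rightarrow> bool list) set" where
  "prodset U U' = {tpair u u' | u u'. u \<in> U \<and> u' \<in> U'}"

definition diagset :: "(bool list \<Rightarrow> bool list) set \<Rightarrow> (bool list \<Rightarrow> bool list) set" where
  "diagset S = {tpair s s | s. s \<in> S}"

definition gcomm :: "('a, 'b) monoid_scheme \<Rightarrow> 'a \<Rightarrow> 'a \<Rightarrow> 'a" where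
  "gcomm G g h = inv\<^bsub>G\<^esub> g \<otimes>\<^bsub>G\<^esub> inv\<^bsub>G\<^esub> h \<otimes>\<^bsub>G\<^esub> g \<otimes>\<^bsub>G\<^esub> h"

definition comm_subgroup :: "('a, 'b) monoid_scheme \<Rightarrow> 'a set \<Rightarrow> 'a set \<Rightarrow> 'a set" where
  "comm_subgroup G A B = generate G {gcomm G a b | a b. a \<in> A \<and> b \<in> B}"

definition Omega :: "('a, 'b) monoid_scheme \<Rightarrow> 'a set \<Rightarrow> 'a set \<Rightarrow> 'a set" where
  "Omega H G K = {v \<in> G. v \<otimes>\<^bsub>H\<^esub> v \<in> K \<and> comm_subgroup H G {v} \<subseteq> K}"

end

theory Submission
  imports Defs
begin


lemma W_carrier: "carrier W = {f. tree_isom f}" by (simp add: W_def)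
lemma W_mult: "a \<otimes>\<^bsub>W\<^esub> b = b \<circ> a" by (simp add: W_def)
lemma W_one: "\<one>\<^bsub>W\<^esub> = id" by (simp add: W_def)

lemma tree_isom_comp: "tree_isom f \<Longrightarrow> tree_isom g \<Longrightarrow> tree_isom (f \<circ> g)"
  unfolding tree_isom_def by (auto intro: bij_comp)

lemma tree_isom_inv: assumes "tree_isom f" shows "tree_isom (inv_into UNIV f)"
proof -
  have b: "bij f" and l: "\<And>w. length (f w) = length w" and p: "\<And>w k. f (take k w) = take k (f w)"
    using assms unfolding tree_isom_def by auto
  have "bij (inv_into UNIV f)" using b by (simp add: bij_imp_bij_inv)
  moreover have "length (inv_into UNIV f w) = length w" for w
    using l[of "inv_into UNIV f w"] b by (simp add: surj_f_inv_f bij_is_surj)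
  moreover have "inv_into UNIV f (take k w) = take k (inv_into UNIV f w)" for w k
  proof -
    have "f (take k (inv_into UNIV f w)) = take k w" using p[of k "inv_into UNIV f w"] b by (simp add: surj_f_inv_f bij_is_surj)
    thus ?thesis using b by (metis bij_inv_eq_iff)
  qed
  ultimately show ?thesis unfolding tree_isom_def by auto
qed

lemma group_W: "group W"
proof (rule groupI)
  show "\<And>x y. x \<in> carrier W \<Longrightarrow> y \<in> carrier W \<Longrightarrow> x \<otimes>\<^bsub>W\<^esub> y \<in> carrier W"
    by (simp add: W_carrier W_mult tree_isom_comp)
  show "\<one>\<^bsub>W\<^esub> \<in> carrier W" by (simp add: W_carrier W_one tree_isom_def)
  show "\<And>x y z. x \<in> carrier W \<Longrightarrow> y \<in> carrier W \<Longrightarrow> z \<in> carrier W \<Longrightarrow>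
      x \<otimes>\<^bsub>W\<^esub> y \<otimes>\<^bsub>W\<^esub> z = x \<otimes>\<^bsub>W\<^esub> (y \<otimes>\<^bsub>W\<^esub> z)"
    by (simp add: W_mult o_assoc)
  show "\<And>x. x \<in> carrier W \<Longrightarrow> \<one>\<^bsub>W\<^esub> \<otimes>\<^bsub>W\<^esub> x = x" by (simp add: W_mult W_one)
  show "\<And>x. x \<in> carrier W \<Longrightarrow> \<exists>y\<in>carrier W. y \<otimes>\<^bsub>W\<^esub> x = \<one>\<^bsub>W\<^esub>"
  proof -
    fix x assume "x \<in> carrier W"
    hence "tree_isom x" by (simp add: W_carrier)
    thus "\<exists>y\<in>carrier W. y \<otimes>\<^bsub>W\<^esub> x = \<one>\<^bsub>W\<^esub>"
    proof (intro bexI[of _ "inv_into UNIV x"])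
      have "bij x" using \<open>tree_isom x\<close> unfolding tree_isom_def by blast
      hence "x \<circ> inv_into UNIV x = id" by (rule surj_iff[THEN iffD1, OF bij_is_surj])
      thus "inv_into UNIV x \<otimes>\<^bsub>W\<^esub> x = \<one>\<^bsub>W\<^esub>" by (simp add: W_mult W_one)
      show "inv_into UNIV x \<in> carrier W" using \<open>tree_isom x\<close> tree_isom_inv by (simp add: W_carrier)
    qed
  qed
qed

interpretation W: group W by (rule group_W)

lemma tpair_simps [simp]: "tpair a b [] = []" "tpair a b (x # v) = x # (if x then b v else a v)"
  by (simp_all add: tpair_def)
lemma sigma_simps [simp]: "sigma [] = []" "sigma (x # v) = (\<not> x) # v"
  by (simp_all add: sigma_def)

lemma tpair_comp: "tpair c d \<circ> tpair a b = tpair (c \<circ> a) (d \<circ> b)"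
  by (rule ext) (simp add: tpair_def split: list.split)

lemma tpair_mult: "tpair a b \<otimes>\<^bsub>W\<^esub> tpair c d = tpair (a \<otimes>\<^bsub>W\<^esub> c) (b \<otimes>\<^bsub>W\<^esub> d)"
  by (simp add: W_mult tpair_comp)

lemma tpair_id: "tpair id id = id"
  by (rule ext) (simp add: tpair_def split: list.split)

lemma tpair_one: "tpair \<one>\<^bsub>W\<^esub> \<one>\<^bsub>W\<^esub> = \<one>\<^bsub>W\<^esub>" by (simp add: W_one tpair_id)

lemma sigma_sigma: "sigma \<circ> sigma = id"
  by (rule ext) (simp add: sigma_def split: list.split)

lemma tpair_carrier: assumes "a \<in> carrier W" "b \<in> carrier W" shows "tpair a b \<in> carrier W"
proof -
  obtain a' b' where a': "a' \<in> carrier W" "a' \<otimes>\<^bsub>W\<^esub> a = \<one>\<^bsub>W\<^esub>" "a \<otimes>\<^bsub>W\<^esub> a' = \<one>\<^bsub>W\<^esub>"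
    and b': "b' \<in> carrier W" "b' \<otimes>\<^bsub>W\<^esub> b = \<one>\<^bsub>W\<^esub>" "b \<otimes>\<^bsub>W\<^esub> b' = \<one>\<^bsub>W\<^esub>"
    using assms W.l_inv W.r_inv W.inv_closed by blast
  have "bij (tpair a b)"
  proof (rule o_bij)
    show "tpair a b \<circ> tpair a' b' = id" using a' b' by (simp add: tpair_comp W_mult W_one tpair_id)
    show "tpair a' b' \<circ> tpair a b = id" using a' b' by (simp add: tpair_comp W_mult W_one tpair_id)
  qed
  moreover have "length (tpair a b w) = length w" for w
    using assms by (cases w) (auto simp: W_carrier tree_isom_def)
  moreover have "tpair a b (take k w) = take k (tpair a b w)" for k w
    using assms by (cases w; cases k) (auto simp: W_carrier tree_isom_def)
  ultimately show ?thesis by (simp add: W_carrier tree_isom_def)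
qed

lemma sigma_carrier: "sigma \<in> carrier W"
proof -
  have "bij sigma" using sigma_sigma o_bij by blast
  moreover have "length (sigma w) = length w" for w by (cases w) auto
  moreover have "sigma (take k w) = take k (sigma w)" for k w by (cases w; cases k) auto
  ultimately show ?thesis by (simp add: W_carrier tree_isom_def)
qed

lemma sigma_sq: "sigma \<otimes>\<^bsub>W\<^esub> sigma = \<one>\<^bsub>W\<^esub>" by (simp add: W_mult W_one sigma_sigma)

lemma sigma_tpair: "sigma \<otimes>\<^bsub>W\<^esub> tpair a b = tpair b a \<otimes>\<^bsub>W\<^esub> sigma"
  by (rule ext) (simp add: W_mult tpair_def sigma_def split: list.split)

lemma tpair_inj: "tpair a b = tpair c d \<Longrightarrow> a = c \<and> b = d"
proof -
  assume h: "tpair a b = tpair c d"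
  have "a = c" proof
    fix v show "a v = c v" using fun_cong[OF h, of "False # v"] by simp qed
  moreover have "b = d" proof
    fix v show "b v = d v" using fun_cong[OF h, of "True # v"] by simp qed
  ultimately show ?thesis by simp
qed

lemma tpair_neq_sigma: "tpair a b \<noteq> tpair c d \<otimes>\<^bsub>W\<^esub> sigma"
proof
  assume "tpair a b = tpair c d \<otimes>\<^bsub>W\<^esub> sigma"
  from fun_cong[OF this, of "[False]"] show False by (simp add: W_mult)
qed

lemma tpair_inv: assumes "a \<in> carrier W" "b \<in> carrier W"
  shows "inv\<^bsub>W\<^esub> (tpair a b) = tpair (inv\<^bsub>W\<^esub> a) (inv\<^bsub>W\<^esub> b)"
  using assms by (intro W.inv_equality) (simp_all add: tpair_mult tpair_one tpair_carrier)

lemma sigma_inv: "inv\<^bsub>W\<^esub> sigma = sigma"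
  using sigma_sq sigma_carrier by (intro W.inv_equality) simp_all

lemma ti_take: "tree_isom g \<Longrightarrow> g (take k w) = take k (g w)" by (simp add: tree_isom_def)
lemma ti_len: "tree_isom g \<Longrightarrow> length (g w) = length w" by (simp add: tree_isom_def)
lemma ti_bij: "tree_isom g \<Longrightarrow> bij g" by (simp add: tree_isom_def)

lemma isom_head: assumes "tree_isom g" shows "\<exists>y. g [x] = [y] \<and> (\<forall>v. \<exists>r. g (x # v) = y # r)"
proof -
  have l: "length (g [x]) = 1" using ti_len[OF assms] by simp
  then obtain y where y: "g [x] = [y]" by (cases "g [x]") auto
  have "\<exists>r. g (x # v) = y # r" for v
  proof -
    have "g (take 1 (x # v)) = take 1 (g (x # v))" by (rule ti_take[OF assms])
    hence "take 1 (g (x # v)) = [y]" using y by simp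
    thus ?thesis by (cases "g (x # v)") auto
  qed
  thus ?thesis using y by blast
qed

lemma untwisted: assumes "tree_isom g" "g [False] = [False]" shows "\<exists>a b. g = tpair a b"
proof -
  have i: "inj g" using ti_bij[OF assms(1)] by (simp add: bij_is_inj)
  obtain y where y: "g [True] = [y]" "\<forall>v. \<exists>r. g (True # v) = y # r" using isom_head[OF assms(1)] by blast
  have "y = True"
  proof (rule ccontr)
    assume "y \<noteq> True" hence "g [True] = g [False]" using y(1) assms(2) by simp
    hence "[True] = [False]" by (rule injD[OF i])
    thus False by simp
  qed
  have f: "\<forall>v. \<exists>r. g (False # v) = False # r" using isom_head[OF assms(1), of False] assms(2) by auto
  define a where "a = (\<lambda>v. tl (g (False # v)))"
  define b where "b = (\<lambda>v. tl (g (True # v)))"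
  have "g = tpair a b"
  proof
    fix w show "g w = tpair a b w"
    proof (cases w)
      case Nil
      have "g (take 0 w) = take 0 (g w)" by (rule ti_take[OF assms(1)])
      thus ?thesis using Nil by simp
    next
      case (Cons x v)
      show ?thesis
      proof (cases x)
        case True
        obtain r where "g (True # v) = True # r" using y(2) \<open>y = True\<close> by blast
        thus ?thesis using Cons True by (simp add: b_def)
      next
        case False
        obtain r where "g (False # v) = False # r" using f by blast
        thus ?thesis using Cons False by (simp add: a_def)
      qed
    qed
  qed
  thus ?thesis by blast
qed

lemma tpair_carrier_rev: assumes "tpair a b \<in> carrier W" shows "a \<in> carrier W \<and> b \<in> carrier W"
proof -
  let ?g = "tpair a b"
  have gi: "inv\<^bsub>W\<^esub> ?g \<in> carrier W" using assms by simp
  have "(inv\<^bsub>W\<^esub> ?g) [False] = [False]"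
  proof -
    have "?g \<otimes>\<^bsub>W\<^esub> inv\<^bsub>W\<^esub> ?g = \<one>\<^bsub>W\<^esub>" using assms by simp
    hence "(inv\<^bsub>W\<^esub> ?g \<circ> ?g) [False] = [False]" by (simp add: W_mult W_one)
    moreover have "a [] = []" using ti_len[of ?g "[False]"] assms by (simp add: W_carrier)
    ultimately show ?thesis by simp
  qed
  then obtain a' b' where ab': "inv\<^bsub>W\<^esub> ?g = tpair a' b'" using untwisted gi W_carrier by blast
  have "?g \<otimes>\<^bsub>W\<^esub> inv\<^bsub>W\<^esub> ?g = \<one>\<^bsub>W\<^esub>" "inv\<^bsub>W\<^esub> ?g \<otimes>\<^bsub>W\<^esub> ?g = \<one>\<^bsub>W\<^esub>" using assms by simp_all
  hence "tpair (a' \<circ> a) (b' \<circ> b) = tpair id id" "tpair (a \<circ> a') (b \<circ> b') = tpair id id"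
    unfolding ab' by (simp_all add: W_mult W_one tpair_comp tpair_id)
  hence c: "a' \<circ> a = id" "b' \<circ> b = id" "a \<circ> a' = id" "b \<circ> b' = id" by (auto dest: tpair_inj)
  have bij: "bij a" "bij b" using o_bij[OF c(1) c(3)] o_bij[OF c(2) c(4)] by auto
  have ti: "tree_isom ?g" using assms W_carrier by simp
  have "length (a v) = length v" "length (b v) = length v" for v
    using ti_len[OF ti, of "False # v"] ti_len[OF ti, of "True # v"] by simp_all
  moreover have "a (take k v) = take k (a v)" "b (take k v) = take k (b v)" for k v
  proof -
    have "?g (take (Suc k) (False # v)) = take (Suc k) (?g (False # v))"
      "?g (take (Suc k) (True # v)) = take (Suc k) (?g (True # v))" by (rule ti_take[OF ti])+
    thus "a (take k v) = take k (a v)" "b (take k v) = take k (b v)" by simp_all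
  qed
  ultimately show ?thesis using bij by (simp add: W_carrier tree_isom_def)
qed

lemma W_decomp: assumes "g \<in> carrier W"
  shows "\<exists>a b. a \<in> carrier W \<and> b \<in> carrier W \<and> (g = tpair a b \<or> g = tpair a b \<otimes>\<^bsub>W\<^esub> sigma)"
proof (cases "g [False] = [False]")
  case True
  then obtain a b where ab: "g = tpair a b" using untwisted assms W_carrier by blast
  moreover have "a \<in> carrier W \<and> b \<in> carrier W" using tpair_carrier_rev[of a b] assms ab by simp
  ultimately show ?thesis by blast
next
  case False
  have tg: "tree_isom g" using assms W_carrier by simp
  obtain y where y: "g [False] = [y]" using isom_head[OF tg, of False] by blast
  have "y = True"
  proof (rule ccontr)
    assume "y \<noteq> True" hence "y = False" by simp
    thus False using y \<open>g [False] \<noteq> [False]\<close> by simp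
  qed
  let ?h = "g \<otimes>\<^bsub>W\<^esub> sigma"
  have h: "?h \<in> carrier W" using assms sigma_carrier by simp
  have "?h [False] = [False]" using y \<open>y = True\<close> by (simp add: W_mult)
  then obtain a b where ab: "?h = tpair a b" using untwisted h W_carrier by blast
  have "g = ?h \<otimes>\<^bsub>W\<^esub> sigma" using assms sigma_carrier by (simp add: W.m_assoc sigma_sq)
  hence "g = tpair a b \<otimes>\<^bsub>W\<^esub> sigma" using ab by simp
  moreover have "a \<in> carrier W \<and> b \<in> carrier W" using tpair_carrier_rev[of a b] h ab by simp
  ultimately show ?thesis by blast
qed



abbreviation wm (infixl "\<bullet>" 70) where "a \<bullet> b \<equiv> a \<otimes>\<^bsub>W\<^esub> b"
abbreviation iv where "iv a \<equiv> inv\<^bsub>W\<^esub> a"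

lemma W_assoc: "a \<bullet> b \<bullet> c = a \<bullet> (b \<bullet> c)" by (simp add: W_mult o_assoc)
lemma W_r_one: "a \<bullet> \<one>\<^bsub>W\<^esub> = a" by (simp add: W_mult W_one)
lemma W_l_one: "\<one>\<^bsub>W\<^esub> \<bullet> a = a" by (simp add: W_mult W_one)
lemma Wc1: "x \<in> carrier W \<Longrightarrow> x \<bullet> (iv x \<bullet> y) = y" by (simp add: W_assoc[symmetric] W_l_one)
lemma Wc2: "x \<in> carrier W \<Longrightarrow> iv x \<bullet> (x \<bullet> y) = y" by (simp add: W_assoc[symmetric] W_l_one)
lemma Wc3: "x \<in> carrier W \<Longrightarrow> x \<bullet> iv x = \<one>\<^bsub>W\<^esub>" by simp
lemma Wc4: "x \<in> carrier W \<Longrightarrow> iv x \<bullet> x = \<one>\<^bsub>W\<^esub>" by simp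

lemmas gs = W_assoc W.inv_mult_group Wc1 Wc2 W_r_one W_l_one

lemma tpair_mult2: "tpair a b \<bullet> (tpair c d \<bullet> z) = tpair (a \<bullet> c) (b \<bullet> d) \<bullet> z"
  by (simp add: W_assoc[symmetric] tpair_mult)
lemma sigma_tpair2: "sigma \<bullet> (tpair a b \<bullet> z) = tpair b a \<bullet> (sigma \<bullet> z)"
  by (simp add: W_assoc[symmetric] sigma_tpair)
lemma sigma_sq2: "sigma \<bullet> (sigma \<bullet> z) = z"
  by (simp add: W_assoc[symmetric] sigma_sq W_l_one)

lemmas ts = W_assoc tpair_mult tpair_mult2 sigma_tpair sigma_tpair2 sigma_sq sigma_sq2 W_r_one W_l_one

lemma norm_iff: assumes "H \<subseteq> carrier W"
  shows "g \<in> normalizer W H \<longleftrightarrow> g \<in> carrier W \<and> (\<forall>h\<in>H. g \<bullet> h \<bullet> iv g \<in> H) \<and> (\<forall>h\<in>H. iv g \<bullet> h \<bullet> g \<in> H)"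
proof -
  have e: "g <#\<^bsub>W\<^esub> H #>\<^bsub>W\<^esub> iv g = (\<lambda>h. g \<bullet> h \<bullet> iv g) ` H" by (auto simp: l_coset_def r_coset_def)
  have "g \<in> normalizer W H \<longleftrightarrow> g \<in> carrier W \<and> (\<lambda>h. g \<bullet> h \<bullet> iv g) ` H = H"
    unfolding normalizer_def stabilizer_def using assms e by auto
  also have "\<dots> \<longleftrightarrow> g \<in> carrier W \<and> (\<forall>h\<in>H. g \<bullet> h \<bullet> iv g \<in> H) \<and> (\<forall>h\<in>H. iv g \<bullet> h \<bullet> g \<in> H)"
  proof
    assume L: "g \<in> carrier W \<and> (\<lambda>h. g \<bullet> h \<bullet> iv g) ` H = H"
    hence g: "g \<in> carrier W" and eq: "(\<lambda>h. g \<bullet> h \<bullet> iv g) ` H = H" by auto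
    have a1: "\<forall>h\<in>H. g \<bullet> h \<bullet> iv g \<in> H"
    proof
      fix h assume "h \<in> H"
      hence "g \<bullet> h \<bullet> iv g \<in> (\<lambda>h. g \<bullet> h \<bullet> iv g) ` H" by (rule imageI)
      thus "g \<bullet> h \<bullet> iv g \<in> H" unfolding eq .
    qed
    have a2: "\<forall>h\<in>H. iv g \<bullet> h \<bullet> g \<in> H"
    proof
      fix h assume "h \<in> H"
      hence "h \<in> (\<lambda>h. g \<bullet> h \<bullet> iv g) ` H" unfolding eq .
      then obtain h' where h': "h' \<in> H" "h = g \<bullet> h' \<bullet> iv g" by (rule imageE)
      have "iv g \<bullet> h \<bullet> g = h'" using h' g assms by (auto simp: gs)
      thus "iv g \<bullet> h \<bullet> g \<in> H" using h' by simp
    qed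
    show "g \<in> carrier W \<and> (\<forall>h\<in>H. g \<bullet> h \<bullet> iv g \<in> H) \<and> (\<forall>h\<in>H. iv g \<bullet> h \<bullet> g \<in> H)"
      using g a1 a2 by blast
  next
    assume R: "g \<in> carrier W \<and> (\<forall>h\<in>H. g \<bullet> h \<bullet> iv g \<in> H) \<and> (\<forall>h\<in>H. iv g \<bullet> h \<bullet> g \<in> H)"
    hence g: "g \<in> carrier W" and a1: "\<forall>h\<in>H. g \<bullet> h \<bullet> iv g \<in> H" and a2: "\<forall>h\<in>H. iv g \<bullet> h \<bullet> g \<in> H" by auto
    have "(\<lambda>h. g \<bullet> h \<bullet> iv g) ` H = H"
    proof
      show "(\<lambda>h. g \<bullet> h \<bullet> iv g) ` H \<subseteq> H" using a1 by blast
      show "H \<subseteq> (\<lambda>h. g \<bullet> h \<bullet> iv g) ` H"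
      proof
        fix h assume h: "h \<in> H"
        have "h = g \<bullet> (iv g \<bullet> h \<bullet> g) \<bullet> iv g" using h g assms by (auto simp: gs)
        moreover have "iv g \<bullet> h \<bullet> g \<in> H" using a2 h by blast
        ultimately show "h \<in> (\<lambda>h. g \<bullet> h \<bullet> iv g) ` H" by (rule image_eqI)
      qed
    qed
    thus "g \<in> carrier W \<and> (\<lambda>h. g \<bullet> h \<bullet> iv g) ` H = H" using g by blast
  qed
  finally show ?thesis .
qed

definition P0 :: "(bool list \<Rightarrow> bool list) set \<Rightarrow> (bool list \<Rightarrow> bool list) set \<Rightarrow> (bool list \<Rightarrow> bool list) set" where
  "P0 Y K = {tpair x y | x y. x \<in> Y \<and> y \<in> Y \<and> x \<bullet> iv y \<in> K}"
definition Pr :: "(bool list \<Rightarrow> bool list) set \<Rightarrow> (bool list \<Rightarrow> bool list) set \<Rightarrow> (bool list \<Rightarrow> bool list) set" where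
  "Pr Y K = P0 Y K \<union> {g \<bullet> sigma | g. g \<in> P0 Y K}"

lemma Pr_I1: "p \<in> P0 Y K \<Longrightarrow> p \<in> Pr Y K" by (simp add: Pr_def)
lemma Pr_I2: "p \<in> P0 Y K \<Longrightarrow> p \<bullet> sigma \<in> Pr Y K" unfolding Pr_def by blast
lemma PrE: "g \<in> Pr Y K \<Longrightarrow> (g \<in> P0 Y K \<Longrightarrow> P) \<Longrightarrow> (\<And>p. p \<in> P0 Y K \<Longrightarrow> g = p \<bullet> sigma \<Longrightarrow> P) \<Longrightarrow> P"
  unfolding Pr_def by blast

lemma P0_tpair: "tpair p q \<in> P0 Y K \<longleftrightarrow> p \<in> Y \<and> q \<in> Y \<and> p \<bullet> iv q \<in> K"
  unfolding P0_def by (auto dest: tpair_inj)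

lemma sigma_neq_tpair: "tpair c d \<bullet> sigma \<noteq> tpair a b" using tpair_neq_sigma[of a b c d] by metis

lemma Pr_tpair: "tpair p q \<in> Pr Y K \<longleftrightarrow> p \<in> Y \<and> q \<in> Y \<and> p \<bullet> iv q \<in> K"
proof -
  have "tpair p q \<notin> {g \<bullet> sigma | g. g \<in> P0 Y K}" unfolding P0_def using tpair_neq_sigma by auto
  thus ?thesis unfolding Pr_def by (auto simp: P0_tpair)
qed

lemma sigma_cancel: "g \<bullet> sigma = h \<bullet> sigma \<Longrightarrow> g = h"
proof -
  assume "g \<bullet> sigma = h \<bullet> sigma"
  hence "g \<bullet> sigma \<bullet> sigma = h \<bullet> sigma \<bullet> sigma" by simp
  thus ?thesis by (simp add: W_assoc sigma_sq W_r_one)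
qed

lemma Pr_tpair_sigma: "tpair p q \<bullet> sigma \<in> Pr Y K \<longleftrightarrow> p \<in> Y \<and> q \<in> Y \<and> p \<bullet> iv q \<in> K"
proof -
  have "tpair p q \<bullet> sigma \<in> {g \<bullet> sigma | g. g \<in> P0 Y K} \<longleftrightarrow> tpair p q \<in> P0 Y K"
    using sigma_cancel by blast
  moreover have "tpair p q \<bullet> sigma \<notin> P0 Y K" unfolding P0_def using sigma_neq_tpair by auto
  ultimately show ?thesis unfolding Pr_def by (auto simp: P0_tpair)
qed

lemma gen_sigma: "generate W {sigma} = {\<one>\<^bsub>W\<^esub>, sigma}"
proof
  show "generate W {sigma} \<subseteq> {\<one>\<^bsub>W\<^esub>, sigma}"
  proof
    fix x assume "x \<in> generate W {sigma}"
    thus "x \<in> {\<one>\<^bsub>W\<^esub>, sigma}" by induction (auto simp: sigma_inv sigma_sq W_l_one W_r_one)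
  qed
  have "\<one>\<^bsub>W\<^esub> \<in> generate W {sigma}" by (rule generate.one)
  moreover have "sigma \<in> generate W {sigma}" by (rule generate.incl) simp
  ultimately show "{\<one>\<^bsub>W\<^esub>, sigma} \<subseteq> generate W {sigma}" by simp
qed

lemma set_mult_W: "H <#>\<^bsub>W\<^esub> K = {h \<bullet> k | h k. h \<in> H \<and> k \<in> K}" by (auto simp: set_mult_def)

lemma smem: "h \<in> H \<Longrightarrow> k \<in> K \<Longrightarrow> h \<bullet> k \<in> H <#>\<^bsub>W\<^esub> K" by (auto simp: set_mult_def)
lemma smemE: "g \<in> H <#>\<^bsub>W\<^esub> K \<Longrightarrow> (\<And>h k. h \<in> H \<Longrightarrow> k \<in> K \<Longrightarrow> g = h \<bullet> k \<Longrightarrow> P) \<Longrightarrow> P"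
  by (auto simp: set_mult_def)
lemma prodset_mem: "u \<in> K \<Longrightarrow> u' \<in> K \<Longrightarrow> tpair u u' \<in> prodset K K" by (auto simp: prodset_def)
lemma prodsetE: "g \<in> prodset K K \<Longrightarrow> (\<And>u u'. u \<in> K \<Longrightarrow> u' \<in> K \<Longrightarrow> g = tpair u u' \<Longrightarrow> P) \<Longrightarrow> P"
  by (auto simp: prodset_def)
lemma diagset_mem: "s \<in> Y \<Longrightarrow> tpair s s \<in> diagset Y" by (auto simp: diagset_def)
lemma diagsetE: "g \<in> diagset Y \<Longrightarrow> (\<And>s. s \<in> Y \<Longrightarrow> g = tpair s s \<Longrightarrow> P) \<Longrightarrow> P"
  by (auto simp: diagset_def)
lemma P0E: "g \<in> P0 Y K \<Longrightarrow> (\<And>x y. x \<in> Y \<Longrightarrow> y \<in> Y \<Longrightarrow> x \<bullet> iv y \<in> K \<Longrightarrow> g = tpair x y \<Longrightarrow> P) \<Longrightarrow> P"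
  by (auto simp: P0_def)

lemma sub_carrier: "subgroup H W \<Longrightarrow> x \<in> H \<Longrightarrow> x \<in> carrier W" by (rule subgroup.mem_carrier)

lemma P0_carrier: "subgroup Y W \<Longrightarrow> P0 Y K \<subseteq> carrier W"
  unfolding P0_def by (auto intro!: tpair_carrier dest: sub_carrier)

lemma pr_prod0:
  assumes K: "subgroup K W" and Y: "subgroup Y W" and KY: "K \<subseteq> Y"
  shows "prodset K K <#>\<^bsub>W\<^esub> diagset Y = P0 Y K"
proof
  show "prodset K K <#>\<^bsub>W\<^esub> diagset Y \<subseteq> P0 Y K"
  proof
    fix g assume "g \<in> prodset K K <#>\<^bsub>W\<^esub> diagset Y"
    then obtain p d where pd: "p \<in> prodset K K" "d \<in> diagset Y" "g = p \<bullet> d" by (rule smemE)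
    obtain u u' where u: "u \<in> K" "u' \<in> K" "p = tpair u u'" using pd(1) by (rule prodsetE)
    obtain s where sd: "s \<in> Y" "d = tpair s s" using pd(2) by (rule diagsetE)
    have uY: "u \<in> Y" "u' \<in> Y" using u KY by auto
    have c: "u \<in> carrier W" "u' \<in> carrier W" "s \<in> carrier W" using uY sd sub_carrier[OF Y] by auto
    have "g = tpair (u \<bullet> s) (u' \<bullet> s)" using pd u sd by (simp add: tpair_mult)
    moreover have "u \<bullet> s \<in> Y" by (rule subgroup.m_closed[OF Y uY(1) sd(1)])
    moreover have "u' \<bullet> s \<in> Y" by (rule subgroup.m_closed[OF Y uY(2) sd(1)])
    moreover have "(u \<bullet> s) \<bullet> iv (u' \<bullet> s) = u \<bullet> iv u'" using c by (simp add: gs)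
    moreover have "u \<bullet> iv u' \<in> K" by (rule subgroup.m_closed[OF K u(1) subgroup.m_inv_closed[OF K u(2)]])
    ultimately show "g \<in> P0 Y K" by (simp add: P0_tpair)
  qed
  show "P0 Y K \<subseteq> prodset K K <#>\<^bsub>W\<^esub> diagset Y"
  proof
    fix g assume "g \<in> P0 Y K"
    then obtain x y where h: "x \<in> Y" "y \<in> Y" "x \<bullet> iv y \<in> K" "g = tpair x y" by (rule P0E)
    have c: "x \<in> carrier W" "y \<in> carrier W" using h sub_carrier[OF Y] by auto
    have e: "g = tpair (x \<bullet> iv y) \<one>\<^bsub>W\<^esub> \<bullet> tpair y y" using h c by (simp add: tpair_mult gs)
    have "\<one>\<^bsub>W\<^esub> \<in> K" using subgroup.one_closed[OF K] .
    hence "tpair (x \<bullet> iv y) \<one>\<^bsub>W\<^esub> \<bullet> tpair y y \<in> prodset K K <#>\<^bsub>W\<^esub> diagset Y"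
      using h by (intro smem prodset_mem diagset_mem)
    thus "g \<in> prodset K K <#>\<^bsub>W\<^esub> diagset Y" using e by simp
  qed
qed

lemma pr_prod:
  assumes K: "subgroup K W" and Y: "subgroup Y W" and KY: "K \<subseteq> Y"
  shows "prodset K K <#>\<^bsub>W\<^esub> generate W {sigma} <#>\<^bsub>W\<^esub> diagset Y = Pr Y K"
proof
  show "prodset K K <#>\<^bsub>W\<^esub> generate W {sigma} <#>\<^bsub>W\<^esub> diagset Y \<subseteq> Pr Y K"
  proof
    fix g assume "g \<in> prodset K K <#>\<^bsub>W\<^esub> generate W {sigma} <#>\<^bsub>W\<^esub> diagset Y"
    then obtain pe d where pd: "pe \<in> prodset K K <#>\<^bsub>W\<^esub> generate W {sigma}" "d \<in> diagset Y" "g = pe \<bullet> d" by (rule smemE)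
    obtain p e where pe: "p \<in> prodset K K" "e \<in> {\<one>\<^bsub>W\<^esub>, sigma}" "pe = p \<bullet> e"
      using pd(1) unfolding gen_sigma by (rule smemE)
    obtain s where sd: "s \<in> Y" "d = tpair s s" using pd(2) by (rule diagsetE)
    have p: "p \<bullet> d \<in> P0 Y K"
      using smem[OF pe(1) pd(2)] unfolding pr_prod0[OF K Y KY] .
    show "g \<in> Pr Y K"
    proof (cases "e = sigma")
      case True
      obtain u u' where u: "p = tpair u u'" using pe(1) by (rule prodsetE)
      have "g = (p \<bullet> d) \<bullet> sigma" using True pd pe sd u by (simp add: ts)
      thus ?thesis using Pr_I2[OF p] by simp
    next
      case False
      hence "g = p \<bullet> d" using pd pe by (simp add: ts)
      thus ?thesis using Pr_I1[OF p] by simp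
    qed
  qed
  show "Pr Y K \<subseteq> prodset K K <#>\<^bsub>W\<^esub> generate W {sigma} <#>\<^bsub>W\<^esub> diagset Y"
  proof
    fix g assume g: "g \<in> Pr Y K"
    obtain p e where pe: "p \<in> P0 Y K" "e \<in> {\<one>\<^bsub>W\<^esub>, sigma}" "g = p \<bullet> e"
    proof -
      consider "g \<in> P0 Y K" | p where "p \<in> P0 Y K" "g = p \<bullet> sigma" using g by (rule PrE)
      thus ?thesis
      proof cases
        case 1 show ?thesis by (rule that[OF 1, of "\<one>\<^bsub>W\<^esub>"]) (simp_all add: W_r_one)
      next
        case 2 show ?thesis by (rule that[OF 2(1), of sigma]) (simp_all add: 2(2))
      qed
    qed
    have "p \<in> prodset K K <#>\<^bsub>W\<^esub> diagset Y" using pr_prod0[OF K Y KY] pe(1) by simp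
    then obtain q d where qd: "q \<in> prodset K K" "d \<in> diagset Y" "p = q \<bullet> d" by (rule smemE)
    obtain s where sd: "s \<in> Y" "d = tpair s s" using qd(2) by (rule diagsetE)
    obtain u u' where u: "q = tpair u u'" using qd(1) by (rule prodsetE)
    have "g = q \<bullet> e \<bullet> d"
    proof (cases "e = sigma")
      case True thus ?thesis using pe qd sd u by (simp add: ts)
    next
      case False hence "e = \<one>\<^bsub>W\<^esub>" using pe by simp
      thus ?thesis using pe qd by (simp add: ts)
    qed
    moreover have "q \<bullet> e \<bullet> d \<in> prodset K K <#>\<^bsub>W\<^esub> generate W {sigma} <#>\<^bsub>W\<^esub> diagset Y"
      unfolding gen_sigma by (rule smem[OF smem[OF qd(1) pe(2)] qd(2)])
    ultimately show "g \<in> prodset K K <#>\<^bsub>W\<^esub> generate W {sigma} <#>\<^bsub>W\<^esub> diagset Y" by simp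
  qed
qed

locale nsub =
  fixes K Y
  assumes K: "subgroup K W" and Y: "subgroup Y W" and KY: "K \<subseteq> Y"
    and nK: "\<And>y k. y \<in> Y \<Longrightarrow> k \<in> K \<Longrightarrow> y \<bullet> k \<bullet> iv y \<in> K"
begin

lemma cY: "y \<in> Y \<Longrightarrow> y \<in> carrier W" using Y sub_carrier by blast
lemma cK: "k \<in> K \<Longrightarrow> k \<in> carrier W" using K sub_carrier by blast
lemma Km: "a \<in> K \<Longrightarrow> b \<in> K \<Longrightarrow> a \<bullet> b \<in> K" by (rule subgroup.m_closed[OF K])
lemma Ki: "a \<in> K \<Longrightarrow> iv a \<in> K" by (rule subgroup.m_inv_closed[OF K])
lemma Ym: "a \<in> Y \<Longrightarrow> b \<in> Y \<Longrightarrow> a \<bullet> b \<in> Y" by (rule subgroup.m_closed[OF Y])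
lemma Yi: "a \<in> Y \<Longrightarrow> iv a \<in> Y" by (rule subgroup.m_inv_closed[OF Y])

lemma P0_swap: "tpair x y \<in> P0 Y K \<Longrightarrow> tpair y x \<in> P0 Y K"
proof -
  assume "tpair x y \<in> P0 Y K"
  hence h: "x \<in> Y" "y \<in> Y" "x \<bullet> iv y \<in> K" by (auto simp: P0_tpair)
  have "y \<bullet> iv x = iv (x \<bullet> iv y)" using h cY by (simp add: gs)
  thus ?thesis using h Ki by (simp add: P0_tpair)
qed

lemma P0_sub: "subgroup (P0 Y K) W"
proof (rule W.subgroupI)
  show "P0 Y K \<subseteq> carrier W" using P0_carrier[OF Y] .
  have "tpair \<one>\<^bsub>W\<^esub> \<one>\<^bsub>W\<^esub> \<in> P0 Y K"
    using subgroup.one_closed[OF Y] subgroup.one_closed[OF K] by (simp add: P0_tpair)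
  thus "P0 Y K \<noteq> {}" by auto
next
  fix g assume "g \<in> P0 Y K"
  then obtain x y where h: "x \<in> Y" "y \<in> Y" "x \<bullet> iv y \<in> K" "g = tpair x y" by (rule P0E)
  have "iv x \<bullet> iv (x \<bullet> iv y) \<bullet> iv (iv x) \<in> K" by (rule nK[OF Yi[OF h(1)] Ki[OF h(3)]])
  moreover have "iv x \<bullet> iv (x \<bullet> iv y) \<bullet> iv (iv x) = iv x \<bullet> iv (iv y)" using h cY by (simp add: gs)
  ultimately show "iv g \<in> P0 Y K" using h cY Yi by (simp add: tpair_inv P0_tpair)
next
  fix g h assume "g \<in> P0 Y K" "h \<in> P0 Y K"
  obtain x y where a: "x \<in> Y" "y \<in> Y" "x \<bullet> iv y \<in> K" "g = tpair x y" using \<open>g \<in> P0 Y K\<close> by (rule P0E)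
  obtain x' y' where b: "x' \<in> Y" "y' \<in> Y" "x' \<bullet> iv y' \<in> K" "h = tpair x' y'" using \<open>h \<in> P0 Y K\<close> by (rule P0E)
  have "x \<bullet> (x' \<bullet> iv y') \<bullet> iv x \<bullet> (x \<bullet> iv y) \<in> K" by (rule Km[OF nK[OF a(1) b(3)] a(3)])
  moreover have "x \<bullet> (x' \<bullet> iv y') \<bullet> iv x \<bullet> (x \<bullet> iv y) = (x \<bullet> x') \<bullet> iv (y \<bullet> y')" using a b cY by (simp add: gs)
  ultimately show "g \<bullet> h \<in> P0 Y K" using a b Ym by (simp add: tpair_mult P0_tpair)
qed

lemma P0_m: "g \<in> P0 Y K \<Longrightarrow> h \<in> P0 Y K \<Longrightarrow> g \<bullet> h \<in> P0 Y K" by (rule subgroup.m_closed[OF P0_sub])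
lemma P0_i: "g \<in> P0 Y K \<Longrightarrow> iv g \<in> P0 Y K" by (rule subgroup.m_inv_closed[OF P0_sub])

lemma P0_swap2: "g \<in> P0 Y K \<Longrightarrow> \<exists>g'\<in>P0 Y K. sigma \<bullet> g = g' \<bullet> sigma"
proof -
  assume "g \<in> P0 Y K"
  then obtain x y where h: "g = tpair x y" "tpair x y \<in> P0 Y K" by (rule P0E) (simp add: P0_tpair)
  have "sigma \<bullet> g = tpair y x \<bullet> sigma" using h by (simp add: sigma_tpair)
  thus ?thesis using P0_swap[OF h(2)] by blast
qed

lemma Pr_sub: "subgroup (Pr Y K) W"
proof (rule W.subgroupI)
  show "Pr Y K \<subseteq> carrier W" unfolding Pr_def using P0_carrier[OF Y] sigma_carrier by auto
  show "Pr Y K \<noteq> {}" using subgroup.one_closed[OF P0_sub] unfolding Pr_def by blast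
next
  fix g assume "g \<in> Pr Y K"
  then consider "g \<in> P0 Y K" | p where "p \<in> P0 Y K" "g = p \<bullet> sigma" by (rule PrE)
  thus "iv g \<in> Pr Y K"
  proof cases
    case 1 thus ?thesis using Pr_I1[OF P0_i] by blast
  next
    case 2
    have pc: "p \<in> carrier W" using 2 P0_carrier[OF Y] by blast
    have "iv g = sigma \<bullet> iv p" using 2 pc sigma_carrier by (simp add: W.inv_mult_group sigma_inv)
    moreover obtain q where "q \<in> P0 Y K" "sigma \<bullet> iv p = q \<bullet> sigma" using P0_swap2 P0_i 2 by blast
    ultimately show ?thesis using Pr_I2 by auto
  qed
next
  fix g h assume g: "g \<in> Pr Y K" and h: "h \<in> Pr Y K"
  from g consider "g \<in> P0 Y K" | p where "p \<in> P0 Y K" "g = p \<bullet> sigma" by (rule PrE)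
  thus "g \<bullet> h \<in> Pr Y K"
  proof cases
    case 1
    from h consider "h \<in> P0 Y K" | q where "q \<in> P0 Y K" "h = q \<bullet> sigma" by (rule PrE)
    thus ?thesis
    proof cases
      case 1 thus ?thesis using Pr_I1[OF P0_m[OF \<open>g \<in> P0 Y K\<close> 1]] by blast
    next
      case 2 hence "g \<bullet> h = (g \<bullet> q) \<bullet> sigma" by (simp add: W_assoc)
      thus ?thesis using Pr_I2[OF P0_m[OF \<open>g \<in> P0 Y K\<close> 2(1)]] by simp
    qed
  next
    case 2
    note p = 2
    from h consider "h \<in> P0 Y K" | q where "q \<in> P0 Y K" "h = q \<bullet> sigma" by (rule PrE)
    thus ?thesis
    proof cases
      case 1
      then obtain h' where h': "h' \<in> P0 Y K" "sigma \<bullet> h = h' \<bullet> sigma" using P0_swap2 by blast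
      have "g \<bullet> h = (p \<bullet> h') \<bullet> sigma" using p h' by (simp add: W_assoc)
      thus ?thesis using Pr_I2[OF P0_m[OF p(1) h'(1)]] by simp
    next
      case 2
      then obtain h' where h': "h' \<in> P0 Y K" "sigma \<bullet> q = h' \<bullet> sigma" using P0_swap2 by blast
      have "g \<bullet> h = p \<bullet> (sigma \<bullet> q) \<bullet> sigma" using p 2 by (simp add: W_assoc)
      also have "\<dots> = p \<bullet> h'" using h' by (simp add: W_assoc sigma_sq W_r_one)
      finally show ?thesis using Pr_I1[OF P0_m[OF p(1) h'(1)]] by simp
    qed
  qed
qed

end



locale th =
  fixes U S
  assumes S: "subgroup S W" and U: "normal U (W\<lparr>carrier := S\<rparr>)"
begin

abbreviation "V \<equiv> Omega W S U"
abbreviation "T \<equiv> normalizer W U \<inter> normalizer W S"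
abbreviation "R \<equiv> Pr S U"

lemma grpS: "group (W\<lparr>carrier := S\<rparr>)" by (rule W.subgroup_imp_group[OF S])
lemma U_subS: "subgroup U (W\<lparr>carrier := S\<rparr>)" by (rule normal_imp_subgroup[OF U])
lemma U_sub: "subgroup U W" by (rule W.incl_subgroup[OF S U_subS])
lemma US: "U \<subseteq> S" using subgroup.subset[OF U_subS] by simp

lemma cS: "x \<in> S \<Longrightarrow> x \<in> carrier W" by (rule sub_carrier[OF S])
lemma cU: "x \<in> U \<Longrightarrow> x \<in> carrier W" by (rule sub_carrier[OF U_sub])
lemma Sm: "a \<in> S \<Longrightarrow> b \<in> S \<Longrightarrow> a \<bullet> b \<in> S" by (rule subgroup.m_closed[OF S])
lemma Si: "a \<in> S \<Longrightarrow> iv a \<in> S" by (rule subgroup.m_inv_closed[OF S])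
lemma Um: "a \<in> U \<Longrightarrow> b \<in> U \<Longrightarrow> a \<bullet> b \<in> U" by (rule subgroup.m_closed[OF U_sub])
lemma Ui: "a \<in> U \<Longrightarrow> iv a \<in> U" by (rule subgroup.m_inv_closed[OF U_sub])
lemma U1: "\<one>\<^bsub>W\<^esub> \<in> U" by (rule subgroup.one_closed[OF U_sub])
lemma S1: "\<one>\<^bsub>W\<^esub> \<in> S" by (rule subgroup.one_closed[OF S])

lemma U_conj: assumes "s \<in> S" "u \<in> U" shows "s \<bullet> u \<bullet> iv s \<in> U"
proof -
  have "s \<otimes>\<^bsub>W\<lparr>carrier := S\<rparr>\<^esub> u \<otimes>\<^bsub>W\<lparr>carrier := S\<rparr>\<^esub> inv\<^bsub>W\<lparr>carrier := S\<rparr>\<^esub> s \<in> U"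
    using group.normal_invE(2)[OF grpS U] assms by simp
  thus ?thesis using assms W.m_inv_consistent[OF S] by simp
qed

lemma U_conj2: assumes "s \<in> S" "u \<in> U" shows "iv s \<bullet> u \<bullet> s \<in> U"
  using U_conj[OF Si[OF assms(1)] assms(2)] cS[OF assms(1)] by simp

lemma Ucl: "x \<in> U \<Longrightarrow> x = y \<Longrightarrow> y \<in> U" by simp

lemma gc: "gcomm W a b = iv a \<bullet> iv b \<bullet> a \<bullet> b" by (simp add: gcomm_def)

lemma V_iff: "v \<in> V \<longleftrightarrow> v \<in> S \<and> v \<bullet> v \<in> U \<and> (\<forall>s\<in>S. gcomm W s v \<in> U)"
proof -
  let ?G = "{gcomm W a b | a b. a \<in> S \<and> b \<in> {v}}"
  have "generate W ?G \<subseteq> U \<longleftrightarrow> ?G \<subseteq> U"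
  proof
    assume "generate W ?G \<subseteq> U"
    moreover have "?G \<subseteq> generate W ?G" proof fix x assume "x \<in> ?G" thus "x \<in> generate W ?G" by (rule generate.incl) qed
    ultimately show "?G \<subseteq> U" by (rule order_trans[rotated])
  next
    assume "?G \<subseteq> U" thus "generate W ?G \<subseteq> U" by (rule W.generate_subgroup_incl[OF _ U_sub])
  qed
  moreover have "?G \<subseteq> U \<longleftrightarrow> (\<forall>s\<in>S. gcomm W s v \<in> U)" by blast
  ultimately show ?thesis unfolding Omega_def comm_subgroup_def by blast
qed

lemma VS: "v \<in> V \<Longrightarrow> v \<in> S" using V_iff by blast
lemma Vsq: "v \<in> V \<Longrightarrow> v \<bullet> v \<in> U" using V_iff by blast
lemma Vgc: "v \<in> V \<Longrightarrow> s \<in> S \<Longrightarrow> iv s \<bullet> iv v \<bullet> s \<bullet> v \<in> U" using V_iff gc by metis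
lemma cV: "v \<in> V \<Longrightarrow> v \<in> carrier W" using VS cS by blast

lemma comm_VS: assumes "c \<in> V" "x \<in> S" shows "c \<bullet> x \<bullet> iv c \<bullet> iv x \<in> U"
proof -
  have "iv (iv x) \<bullet> iv c \<bullet> iv x \<bullet> c \<in> U" by (rule Vgc[OF assms(1) Si[OF assms(2)]])
  hence "c \<bullet> (iv (iv x) \<bullet> iv c \<bullet> iv x \<bullet> c) \<bullet> iv c \<in> U" by (rule U_conj[OF VS[OF assms(1)]])
  moreover have "c \<bullet> (iv (iv x) \<bullet> iv c \<bullet> iv x \<bullet> c) \<bullet> iv c = c \<bullet> x \<bullet> iv c \<bullet> iv x"
    using cV[OF assms(1)] cS[OF assms(2)] by (simp add: gs)
  ultimately show ?thesis by simp
qed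

lemma comm_VS': assumes "c \<in> V" "x \<in> S" shows "x \<bullet> c \<bullet> iv x \<bullet> iv c \<in> U"
proof -
  have "iv (c \<bullet> x \<bullet> iv c \<bullet> iv x) \<in> U" by (rule Ui[OF comm_VS[OF assms]])
  moreover have "iv (c \<bullet> x \<bullet> iv c \<bullet> iv x) = x \<bullet> c \<bullet> iv x \<bullet> iv c"
    using cV[OF assms(1)] cS[OF assms(2)] by (simp add: gs)
  ultimately show ?thesis by simp
qed

lemma U_V: "U \<subseteq> V"
proof
  fix u assume u: "u \<in> U"
  have uS: "u \<in> S" using u US by blast
  have "\<forall>s\<in>S. gcomm W s u \<in> U"
  proof
    fix s assume s: "s \<in> S"
    have "iv s \<bullet> iv u \<bullet> s \<in> U" by (rule U_conj2[OF s Ui[OF u]])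
    hence "iv s \<bullet> iv u \<bullet> s \<bullet> u \<in> U" using u Um by blast
    thus "gcomm W s u \<in> U" by (simp add: gc)
  qed
  thus "u \<in> V" using V_iff uS Um[OF u u] by blast
qed

lemma V_sub: "subgroup V W"
proof (rule W.subgroupI)
  show "V \<subseteq> carrier W" using cV by blast
  show "V \<noteq> {}" using U_V U1 by blast
next
  fix v assume v: "v \<in> V"
  have vS: "v \<in> S" and cv: "v \<in> carrier W" using v VS cV by auto
  have "iv v \<bullet> iv v = iv (v \<bullet> v)" using cv by (simp add: W.inv_mult_group)
  hence sq: "iv v \<bullet> iv v \<in> U" using Ui[OF Vsq[OF v]] by simp
  have "\<forall>s\<in>S. gcomm W s (iv v) \<in> U"
  proof
    fix s assume s: "s \<in> S"
    have "iv s \<bullet> v \<bullet> iv (iv s) \<bullet> iv v \<in> U" by (rule comm_VS'[OF v Si[OF s]])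
    thus "gcomm W s (iv v) \<in> U" using cv cS[OF s] by (simp add: gc)
  qed
  thus "iv v \<in> V" using V_iff Si[OF vS] sq by blast
next
  fix v w assume v: "v \<in> V" and w: "w \<in> V"
  have vS: "v \<in> S" and cv: "v \<in> carrier W" and wS: "w \<in> S" and cw: "w \<in> carrier W" using v w VS cV by auto
  have m1: "v \<bullet> (w \<bullet> v \<bullet> iv w \<bullet> iv v) \<bullet> iv v \<in> U" by (rule U_conj[OF vS comm_VS[OF w vS]])
  have "v \<bullet> (w \<bullet> v \<bullet> iv w \<bullet> iv v) \<bullet> iv v \<bullet> (v \<bullet> v) \<bullet> (w \<bullet> w) \<in> U"
    by (rule Um[OF Um[OF m1 Vsq[OF v]] Vsq[OF w]])
  moreover have "v \<bullet> (w \<bullet> v \<bullet> iv w \<bullet> iv v) \<bullet> iv v \<bullet> (v \<bullet> v) \<bullet> (w \<bullet> w) = (v \<bullet> w) \<bullet> (v \<bullet> w)"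
    using cv cw by (simp add: gs)
  ultimately have sq: "(v \<bullet> w) \<bullet> (v \<bullet> w) \<in> U" by simp
  have "\<forall>s\<in>S. gcomm W s (v \<bullet> w) \<in> U"
  proof
    fix s assume s: "s \<in> S"
    have g1: "iv s \<bullet> iv w \<bullet> s \<bullet> w \<in> U" by (rule Vgc[OF w s])
    have g2: "iv w \<bullet> (iv s \<bullet> iv v \<bullet> s \<bullet> v) \<bullet> iv (iv w) \<in> U" by (rule U_conj[OF Si[OF wS] Vgc[OF v s]])
    have "(iv s \<bullet> iv w \<bullet> s \<bullet> w) \<bullet> (iv w \<bullet> (iv s \<bullet> iv v \<bullet> s \<bullet> v) \<bullet> iv (iv w)) \<in> U" by (rule Um[OF g1 g2])
    moreover have "(iv s \<bullet> iv w \<bullet> s \<bullet> w) \<bullet> (iv w \<bullet> (iv s \<bullet> iv v \<bullet> s \<bullet> v) \<bullet> iv (iv w)) = gcomm W s (v \<bullet> w)"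
      using cv cw cS[OF s] by (simp add: gs gc)
    ultimately show "gcomm W s (v \<bullet> w) \<in> U" by simp
  qed
  thus "v \<bullet> w \<in> V" using V_iff Sm[OF vS wS] sq by blast
qed

lemma Vm: "a \<in> V \<Longrightarrow> b \<in> V \<Longrightarrow> a \<bullet> b \<in> V" by (rule subgroup.m_closed[OF V_sub])
lemma Vi: "a \<in> V \<Longrightarrow> iv a \<in> V" by (rule subgroup.m_inv_closed[OF V_sub])


lemma T_iff: "t \<in> T \<longleftrightarrow> t \<in> carrier W \<and> (\<forall>u\<in>U. t \<bullet> u \<bullet> iv t \<in> U) \<and> (\<forall>u\<in>U. iv t \<bullet> u \<bullet> t \<in> U)
   \<and> (\<forall>s\<in>S. t \<bullet> s \<bullet> iv t \<in> S) \<and> (\<forall>s\<in>S. iv t \<bullet> s \<bullet> t \<in> S)"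
  using norm_iff[of U t] norm_iff[of S t] subgroup.subset[OF U_sub] subgroup.subset[OF S] by blast

lemma T_sub: "subgroup T W"
  by (rule W.subgroups_Inter_pair[OF W.normalizer_imp_subgroup W.normalizer_imp_subgroup])
     (simp_all add: subgroup.subset[OF U_sub] subgroup.subset[OF S])

lemma cT: "t \<in> T \<Longrightarrow> t \<in> carrier W" using T_iff by blast
lemma TU1: "t \<in> T \<Longrightarrow> u \<in> U \<Longrightarrow> t \<bullet> u \<bullet> iv t \<in> U" using T_iff by blast
lemma TU2: "t \<in> T \<Longrightarrow> u \<in> U \<Longrightarrow> iv t \<bullet> u \<bullet> t \<in> U" using T_iff by blast
lemma TS1: "t \<in> T \<Longrightarrow> s \<in> S \<Longrightarrow> t \<bullet> s \<bullet> iv t \<in> S" using T_iff by blast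
lemma TS2: "t \<in> T \<Longrightarrow> s \<in> S \<Longrightarrow> iv t \<bullet> s \<bullet> t \<in> S" using T_iff by blast
lemma Tm: "a \<in> T \<Longrightarrow> b \<in> T \<Longrightarrow> a \<bullet> b \<in> T" by (rule subgroup.m_closed[OF T_sub])
lemma Ti: "a \<in> T \<Longrightarrow> iv a \<in> T" by (rule subgroup.m_inv_closed[OF T_sub])

lemma S_T: "S \<subseteq> T"
proof
  fix s assume s: "s \<in> S"
  have "(\<forall>u\<in>U. s \<bullet> u \<bullet> iv s \<in> U)" "(\<forall>u\<in>U. iv s \<bullet> u \<bullet> s \<in> U)"
    using U_conj[OF s] U_conj2[OF s] by blast+
  moreover have "(\<forall>x\<in>S. s \<bullet> x \<bullet> iv s \<in> S)" "(\<forall>x\<in>S. iv s \<bullet> x \<bullet> s \<in> S)"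
    using Sm Si s by blast+
  ultimately show "s \<in> T" using T_iff cS[OF s] by blast
qed

lemma V_T: "V \<subseteq> T" using S_T VS by blast

lemma V_conjT: assumes t: "t \<in> T" and v: "v \<in> V" shows "t \<bullet> v \<bullet> iv t \<in> V"
proof -
  have ct: "t \<in> carrier W" and cv: "v \<in> carrier W" using cT[OF t] cV[OF v] by auto
  have a: "t \<bullet> v \<bullet> iv t \<in> S" by (rule TS1[OF t VS[OF v]])
  have "t \<bullet> (v \<bullet> v) \<bullet> iv t \<in> U" by (rule TU1[OF t Vsq[OF v]])
  hence b: "(t \<bullet> v \<bullet> iv t) \<bullet> (t \<bullet> v \<bullet> iv t) \<in> U" using ct cv by (simp add: gs)
  have "\<forall>s\<in>S. gcomm W s (t \<bullet> v \<bullet> iv t) \<in> U"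
  proof
    fix s assume s: "s \<in> S"
    have "t \<bullet> (iv (iv t \<bullet> s \<bullet> t) \<bullet> iv v \<bullet> (iv t \<bullet> s \<bullet> t) \<bullet> v) \<bullet> iv t \<in> U"
      by (rule TU1[OF t Vgc[OF v TS2[OF t s]]])
    thus "gcomm W s (t \<bullet> v \<bullet> iv t) \<in> U" using ct cv cS[OF s] by (simp add: gs gc)
  qed
  thus ?thesis using V_iff a b by blast
qed

lemma ns_US: "nsub U S"
  unfolding nsub_def using U_sub S US U_conj by blast
lemma ns_VT: "nsub V T"
  unfolding nsub_def using V_sub T_sub V_T V_conjT by blast
lemma ns_UV: "nsub U V"
  unfolding nsub_def using U_sub V_sub U_V U_conj VS by blast

lemma R_sub: "subgroup R W" by (rule nsub.Pr_sub[OF ns_US])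
lemma R_carrier: "R \<subseteq> carrier W" by (rule subgroup.subset[OF R_sub])
lemma sigma_R: "sigma \<in> R"
proof -
  have "tpair \<one>\<^bsub>W\<^esub> \<one>\<^bsub>W\<^esub> \<in> P0 S U" using S1 U1 by (simp add: P0_tpair)
  hence "tpair \<one>\<^bsub>W\<^esub> \<one>\<^bsub>W\<^esub> \<bullet> sigma \<in> R" by (rule Pr_I2)
  thus ?thesis by (simp add: tpair_one W_l_one)
qed

abbreviation "N \<equiv> normalizer W R"
lemma N_sub: "subgroup N W" by (rule W.normalizer_imp_subgroup[OF R_carrier])
lemma N_iff: "g \<in> N \<longleftrightarrow> g \<in> carrier W \<and> (\<forall>r\<in>R. g \<bullet> r \<bullet> iv g \<in> R) \<and> (\<forall>r\<in>R. iv g \<bullet> r \<bullet> g \<in> R)"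
  by (rule norm_iff[OF R_carrier])
lemma R_N: "R \<subseteq> N"
proof
  fix g assume g: "g \<in> R"
  have "g \<in> carrier W" using g R_carrier by blast
  moreover have "\<forall>r\<in>R. g \<bullet> r \<bullet> iv g \<in> R"
    using g subgroup.m_closed[OF R_sub] subgroup.m_inv_closed[OF R_sub] by blast
  moreover have "\<forall>r\<in>R. iv g \<bullet> r \<bullet> g \<in> R"
    using g subgroup.m_closed[OF R_sub] subgroup.m_inv_closed[OF R_sub] by blast
  ultimately show "g \<in> N" using N_iff by blast
qed

lemma conjR: assumes a: "a \<in> T" and b: "b \<in> T" and c: "a \<bullet> iv b \<in> V" and r: "r \<in> R"
  shows "tpair a b \<bullet> r \<bullet> iv (tpair a b) \<in> R"
proof -
  have ca: "a \<in> carrier W" and cb: "b \<in> carrier W" using a b cT by auto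
  let ?c = "a \<bullet> iv b"
  have cS': "?c \<in> S" using VS[OF c] .
  show ?thesis using r
  proof (rule PrE)
    assume "r \<in> P0 S U"
    then obtain x y where xy: "x \<in> S" "y \<in> S" "x \<bullet> iv y \<in> U" "r = tpair x y" by (rule P0E)
    have cx: "x \<in> carrier W" and cy: "y \<in> carrier W" using xy cS by auto
    have e: "tpair a b \<bullet> r \<bullet> iv (tpair a b) = tpair (a \<bullet> x \<bullet> iv a) (b \<bullet> y \<bullet> iv b)"
      using xy ca cb by (simp add: tpair_inv tpair_mult)
    have m1: "?c \<bullet> (b \<bullet> x \<bullet> iv b) \<bullet> iv ?c \<bullet> iv (b \<bullet> x \<bullet> iv b) \<in> U" by (rule comm_VS[OF c TS1[OF b xy(1)]])
    have m2: "b \<bullet> (x \<bullet> iv y) \<bullet> iv b \<in> U" by (rule TU1[OF b xy(3)])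
    have "(?c \<bullet> (b \<bullet> x \<bullet> iv b) \<bullet> iv ?c \<bullet> iv (b \<bullet> x \<bullet> iv b)) \<bullet> (b \<bullet> (x \<bullet> iv y) \<bullet> iv b) \<in> U" by (rule Um[OF m1 m2])
    moreover have "(?c \<bullet> (b \<bullet> x \<bullet> iv b) \<bullet> iv ?c \<bullet> iv (b \<bullet> x \<bullet> iv b)) \<bullet> (b \<bullet> (x \<bullet> iv y) \<bullet> iv b)
        = (a \<bullet> x \<bullet> iv a) \<bullet> iv (b \<bullet> y \<bullet> iv b)" using ca cb cx cy by (simp add: gs)
    ultimately have "(a \<bullet> x \<bullet> iv a) \<bullet> iv (b \<bullet> y \<bullet> iv b) \<in> U" by simp
    moreover have "a \<bullet> x \<bullet> iv a \<in> S" by (rule TS1[OF a xy(1)])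
    moreover have "b \<bullet> y \<bullet> iv b \<in> S" by (rule TS1[OF b xy(2)])
    ultimately show ?thesis unfolding e by (simp add: Pr_tpair)
  next
    fix p assume p: "p \<in> P0 S U" and rp: "r = p \<bullet> sigma"
    obtain x y where xy: "x \<in> S" "y \<in> S" "x \<bullet> iv y \<in> U" "p = tpair x y" using p by (rule P0E)
    have cx: "x \<in> carrier W" and cy: "y \<in> carrier W" using xy cS by auto
    have e: "tpair a b \<bullet> r \<bullet> iv (tpair a b) = tpair (a \<bullet> x \<bullet> iv b) (b \<bullet> y \<bullet> iv a) \<bullet> sigma"
      using xy rp ca cb by (simp add: tpair_inv ts)
    let ?x' = "b \<bullet> x \<bullet> iv b"
    have m1: "?c \<bullet> ?x' \<bullet> iv ?c \<bullet> iv ?x' \<in> U" by (rule comm_VS[OF c TS1[OF b xy(1)]])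
    have m2: "b \<bullet> (x \<bullet> iv y) \<bullet> iv b \<in> U" by (rule TU1[OF b xy(3)])
    have m3: "?x' \<bullet> (?c \<bullet> ?c) \<bullet> iv ?x' \<in> U" by (rule U_conj[OF TS1[OF b xy(1)] Vsq[OF c]])
    have "(?c \<bullet> ?x' \<bullet> iv ?c \<bullet> iv ?x') \<bullet> (?x' \<bullet> (?c \<bullet> ?c) \<bullet> iv ?x') \<bullet> (b \<bullet> (x \<bullet> iv y) \<bullet> iv b) \<in> U"
      by (rule Um[OF Um[OF m1 m3] m2])
    moreover have "(?c \<bullet> ?x' \<bullet> iv ?c \<bullet> iv ?x') \<bullet> (?x' \<bullet> (?c \<bullet> ?c) \<bullet> iv ?x') \<bullet> (b \<bullet> (x \<bullet> iv y) \<bullet> iv b)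
        = (a \<bullet> x \<bullet> iv b) \<bullet> iv (b \<bullet> y \<bullet> iv a)" using ca cb cx cy by (simp add: gs)
    ultimately have "(a \<bullet> x \<bullet> iv b) \<bullet> iv (b \<bullet> y \<bullet> iv a) \<in> U" by simp
    moreover have "a \<bullet> x \<bullet> iv b \<in> S"
    proof -
      have "?c \<bullet> ?x' \<in> S" by (rule Sm[OF cS' TS1[OF b xy(1)]])
      moreover have "?c \<bullet> ?x' = a \<bullet> x \<bullet> iv b" using ca cb cx by (simp add: gs)
      ultimately show ?thesis by simp
    qed
    moreover have "b \<bullet> y \<bullet> iv a \<in> S"
    proof -
      have "(b \<bullet> y \<bullet> iv b) \<bullet> iv ?c \<in> S" by (rule Sm[OF TS1[OF b xy(2)] Si[OF cS']])
      moreover have "(b \<bullet> y \<bullet> iv b) \<bullet> iv ?c = b \<bullet> y \<bullet> iv a" using ca cb cy by (simp add: gs)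
      ultimately show ?thesis by simp
    qed
    ultimately show ?thesis unfolding e by (simp add: Pr_tpair_sigma)
  qed
qed


lemma N_tpair: assumes ca: "a \<in> carrier W" and cb: "b \<in> carrier W" and h: "tpair a b \<in> N"
  shows "a \<in> T \<and> b \<in> T \<and> a \<bullet> iv b \<in> V"
proof -
  let ?h = "tpair a b"
  have A1: "\<And>r. r \<in> R \<Longrightarrow> ?h \<bullet> r \<bullet> iv ?h \<in> R" and A2: "\<And>r. r \<in> R \<Longrightarrow> iv ?h \<bullet> r \<bullet> ?h \<in> R"
    using h N_iff by blast+
  have c1: "\<And>p q. ?h \<bullet> tpair p q \<bullet> iv ?h = tpair (a \<bullet> p \<bullet> iv a) (b \<bullet> q \<bullet> iv b)"
    using ca cb by (simp add: tpair_inv tpair_mult)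
  have c2: "\<And>p q. iv ?h \<bullet> tpair p q \<bullet> ?h = tpair (iv a \<bullet> p \<bullet> a) (iv b \<bullet> q \<bullet> b)"
    using ca cb by (simp add: tpair_inv tpair_mult)
  have diag: "tpair x x \<in> R" if "x \<in> S" for x
    using that cS[OF that] U1 by (simp add: Pr_tpair)
  have s1: "a \<bullet> x \<bullet> iv a \<in> S \<and> b \<bullet> x \<bullet> iv b \<in> S \<and> (a \<bullet> x \<bullet> iv a) \<bullet> iv (b \<bullet> x \<bullet> iv b) \<in> U" if "x \<in> S" for x
    using A1[OF diag[OF that]] unfolding c1 by (simp add: Pr_tpair)
  have s2: "iv a \<bullet> x \<bullet> a \<in> S \<and> iv b \<bullet> x \<bullet> b \<in> S" if "x \<in> S" for x
    using A2[OF diag[OF that]] unfolding c2 by (simp add: Pr_tpair)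
  have l1: "tpair u \<one>\<^bsub>W\<^esub> \<in> R" if "u \<in> U" for u
    using that US S1 cU[OF that] by (auto simp: Pr_tpair W_r_one)
  have l2: "tpair \<one>\<^bsub>W\<^esub> u \<in> R" if "u \<in> U" for u
    using that US S1 cU[OF that] Ui by (auto simp: Pr_tpair W_l_one)
  have ua: "a \<bullet> u \<bullet> iv a \<in> U \<and> iv a \<bullet> u \<bullet> a \<in> U" if "u \<in> U" for u
    using A1[OF l1[OF that]] A2[OF l1[OF that]] unfolding c1 c2 using ca cb by (simp add: Pr_tpair W_r_one)
  have ub: "b \<bullet> u \<bullet> iv b \<in> U \<and> iv b \<bullet> u \<bullet> b \<in> U" if "u \<in> U" for u
  proof -
    have "iv (b \<bullet> u \<bullet> iv b) \<in> U" "iv (iv b \<bullet> u \<bullet> b) \<in> U"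
      using A1[OF l2[OF that]] A2[OF l2[OF that]] unfolding c1 c2 using ca cb by (simp_all add: Pr_tpair W_l_one)
    hence "iv (iv (b \<bullet> u \<bullet> iv b)) \<in> U" "iv (iv (iv b \<bullet> u \<bullet> b)) \<in> U" using Ui by auto
    thus ?thesis using ca cb cU[OF that] by simp
  qed
  have aT: "a \<in> T" using T_iff ca ua s1 s2 by blast
  have bT: "b \<in> T" using T_iff cb ub s1 s2 by blast
  let ?c = "a \<bullet> iv b"
  have "?h \<bullet> sigma \<bullet> iv ?h = tpair ?c (b \<bullet> iv a) \<bullet> sigma"
    using ca cb by (simp add: tpair_inv ts)
  hence "tpair ?c (b \<bullet> iv a) \<bullet> sigma \<in> R" using A1[OF sigma_R] by simp
  hence cS': "?c \<in> S" and "?c \<bullet> iv (b \<bullet> iv a) \<in> U" by (simp_all add: Pr_tpair_sigma)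
  hence csq: "?c \<bullet> ?c \<in> U" using ca cb by (simp add: gs)
  have "\<forall>s\<in>S. gcomm W s ?c \<in> U"
  proof
    fix s assume s: "s \<in> S"
    let ?x = "iv b \<bullet> iv s \<bullet> b"
    have xS: "?x \<in> S" using s2[OF Si[OF s]] by blast
    have "(a \<bullet> ?x \<bullet> iv a) \<bullet> iv (b \<bullet> ?x \<bullet> iv b) \<in> U" using s1[OF xS] by blast
    hence "iv ?c \<bullet> ((a \<bullet> ?x \<bullet> iv a) \<bullet> iv (b \<bullet> ?x \<bullet> iv b)) \<bullet> ?c \<in> U" by (rule U_conj2[OF cS'])
    thus "gcomm W s ?c \<in> U" using ca cb cS[OF s] by (simp add: gs gc)
  qed
  hence "?c \<in> V" using V_iff cS' csq by blast
  thus ?thesis using aT bT by blast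
qed

lemma N_eq: "N = Pr T V"
proof
  show "N \<subseteq> Pr T V"
  proof
    fix g assume g: "g \<in> N"
    have cg: "g \<in> carrier W" using g N_iff by blast
    obtain a b where ab: "a \<in> carrier W" "b \<in> carrier W" "g = tpair a b \<or> g = tpair a b \<bullet> sigma"
      using W_decomp[OF cg] by blast
    have sN: "sigma \<in> N" using R_N sigma_R by blast
    have "tpair a b \<in> N"
    proof (cases "g = tpair a b")
      case True thus ?thesis using g by simp
    next
      case False
      hence "g = tpair a b \<bullet> sigma" using ab by blast
      hence "g \<bullet> sigma = tpair a b" by (simp add: ts)
      moreover have "g \<bullet> sigma \<in> N" by (rule subgroup.m_closed[OF N_sub g sN])
      ultimately show ?thesis by simp
    qed
    hence "tpair a b \<in> P0 T V" using N_tpair[OF ab(1,2)] by (simp add: P0_tpair)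
    thus "g \<in> Pr T V" using ab(3) Pr_I1 Pr_I2 by blast
  qed
  show "Pr T V \<subseteq> N"
  proof
    fix g assume g: "g \<in> Pr T V"
    have Nt: "tpair a b \<in> N" if t: "tpair a b \<in> P0 T V" for a b
    proof -
      have h: "a \<in> T" "b \<in> T" "a \<bullet> iv b \<in> V" using t by (simp_all add: P0_tpair)
      have ca: "a \<in> carrier W" and cb: "b \<in> carrier W" using h cT by auto
      have ti: "iv (tpair a b) \<in> P0 T V" by (rule nsub.P0_i[OF ns_VT t])
      hence hi: "iv a \<in> T" "iv b \<in> T" "iv a \<bullet> iv (iv b) \<in> V" using ca cb by (simp_all add: tpair_inv P0_tpair)
      have "\<forall>r\<in>R. tpair a b \<bullet> r \<bullet> iv (tpair a b) \<in> R" using conjR[OF h] by blast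
      moreover have "\<forall>r\<in>R. iv (tpair a b) \<bullet> r \<bullet> tpair a b \<in> R"
      proof
        fix r assume r: "r \<in> R"
        have "tpair (iv a) (iv b) \<bullet> r \<bullet> iv (tpair (iv a) (iv b)) \<in> R" by (rule conjR[OF hi r])
        thus "iv (tpair a b) \<bullet> r \<bullet> tpair a b \<in> R" using ca cb by (simp add: tpair_inv)
      qed
      moreover have "tpair a b \<in> carrier W" using tpair_carrier[OF ca cb] .
      ultimately show ?thesis using N_iff by blast
    qed
    have NP: "p \<in> N" if "p \<in> P0 T V" for p
      using that by (rule P0E) (use Nt in \<open>simp add: P0_tpair\<close>)
    show "g \<in> N" using g
    proof (rule PrE)
      assume "g \<in> P0 T V" thus "g \<in> N" by (rule NP)
    next
      fix p assume "p \<in> P0 T V" "g = p \<bullet> sigma"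
      thus "g \<in> N" using subgroup.m_closed[OF N_sub NP[of p] R_N[THEN subsetD, OF sigma_R]] by simp
    qed
  qed
qed

end



lemma rc_upd: "r_coset (W\<lparr>carrier := A\<rparr>) = r_coset W" by (rule ext)+ (simp add: r_coset_def)
lemma sm_upd: "set_mult (W\<lparr>carrier := A\<rparr>) = set_mult W" by (rule ext)+ (simp add: set_mult_def)
lemma rcosets_upd: "rcosets\<^bsub>W\<lparr>carrier := A\<rparr>\<^esub> H = {H #>\<^bsub>W\<^esub> a | a. a \<in> A}"
  by (auto simp: RCOSETS_def rc_upd)

lemma rcos_eqI: assumes "subgroup H W" "x \<in> carrier W" "y \<in> carrier W" "y \<bullet> iv x \<in> H"
  shows "H #>\<^bsub>W\<^esub> x = H #>\<^bsub>W\<^esub> y"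
proof -
  have "y \<in> H #>\<^bsub>W\<^esub> x" by (rule subgroup.rcos_module_rev[OF assms(1) group_W assms(2,3,4)])
  thus ?thesis by (rule W.repr_independence[OF _ assms(2,1)])
qed

lemma rcos_one_iff: assumes "subgroup H W" "g \<in> carrier W"
  shows "H #>\<^bsub>W\<^esub> g = H \<longleftrightarrow> g \<in> H"
proof
  assume "H #>\<^bsub>W\<^esub> g = H"
  moreover have "g \<in> H #>\<^bsub>W\<^esub> g" by (rule W.rcos_self[OF assms(2,1)])
  ultimately show "g \<in> H" by simp
next
  assume "g \<in> H" thus "H #>\<^bsub>W\<^esub> g = H" by (rule W.coset_join2[OF assms(2,1)])
qed

context th
begin

lemma V_normal_T: "normal V (W\<lparr>carrier := T\<rparr>)"
proof -
  have G: "group (W\<lparr>carrier := T\<rparr>)" by (rule W.subgroup_imp_group[OF T_sub])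
  show ?thesis
  proof (rule group.normal_invI[OF G])
    show "subgroup V (W\<lparr>carrier := T\<rparr>)" by (rule W.subgroup_incl[OF V_sub T_sub V_T])
  next
    fix x h assume "x \<in> carrier (W\<lparr>carrier := T\<rparr>)" "h \<in> V"
    thus "x \<otimes>\<^bsub>W\<lparr>carrier := T\<rparr>\<^esub> h \<otimes>\<^bsub>W\<lparr>carrier := T\<rparr>\<^esub> inv\<^bsub>W\<lparr>carrier := T\<rparr>\<^esub> x \<in> V"
      using V_conjT W.m_inv_consistent[OF T_sub] by simp
  qed
qed

lemma S_normal_T: "normal S (W\<lparr>carrier := T\<rparr>)"
proof -
  have G: "group (W\<lparr>carrier := T\<rparr>)" by (rule W.subgroup_imp_group[OF T_sub])
  show ?thesis
  proof (rule group.normal_invI[OF G])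
    show "subgroup S (W\<lparr>carrier := T\<rparr>)" by (rule W.subgroup_incl[OF S T_sub S_T])
  next
    fix x h assume "x \<in> carrier (W\<lparr>carrier := T\<rparr>)" "h \<in> S"
    thus "x \<otimes>\<^bsub>W\<lparr>carrier := T\<rparr>\<^esub> h \<otimes>\<^bsub>W\<lparr>carrier := T\<rparr>\<^esub> inv\<^bsub>W\<lparr>carrier := T\<rparr>\<^esub> x \<in> S"
      using TS1 W.m_inv_consistent[OF T_sub] by simp
  qed
qed

lemma U_normal_V: "normal U (W\<lparr>carrier := V\<rparr>)"
proof -
  have G: "group (W\<lparr>carrier := V\<rparr>)" by (rule W.subgroup_imp_group[OF V_sub])
  show ?thesis
  proof (rule group.normal_invI[OF G])
    show "subgroup U (W\<lparr>carrier := V\<rparr>)" by (rule W.subgroup_incl[OF U_sub V_sub U_V])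
  next
    fix x h assume "x \<in> carrier (W\<lparr>carrier := V\<rparr>)" "h \<in> U"
    thus "x \<otimes>\<^bsub>W\<lparr>carrier := V\<rparr>\<^esub> h \<otimes>\<^bsub>W\<lparr>carrier := V\<rparr>\<^esub> inv\<^bsub>W\<lparr>carrier := V\<rparr>\<^esub> x \<in> U"
      using U_conj VS W.m_inv_consistent[OF V_sub] by simp
  qed
qed

lemma comm_part: "comm_subgroup W (prodset V V) R \<subseteq> prodset U U <#>\<^bsub>W\<^esub> diagset V"
proof -
  have eq: "prodset U U <#>\<^bsub>W\<^esub> diagset V = P0 V U" by (rule pr_prod0[OF U_sub V_sub U_V])
  have P: "subgroup (P0 V U) W" by (rule nsub.P0_sub[OF ns_UV])
  have "{gcomm W a b | a b. a \<in> prodset V V \<and> b \<in> R} \<subseteq> P0 V U"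
  proof
    fix g assume "g \<in> {gcomm W a b | a b. a \<in> prodset V V \<and> b \<in> R}"
    then obtain a r where ar: "a \<in> prodset V V" "r \<in> R" "g = gcomm W a r" by blast
    obtain v1 v2 where v: "v1 \<in> V" "v2 \<in> V" "a = tpair v1 v2" using ar(1) by (rule prodsetE)
    have c1: "v1 \<in> carrier W" and c2: "v2 \<in> carrier W" using v cV by auto
    have s1: "v1 \<in> S" and s2: "v2 \<in> S" using v VS by auto
    show "g \<in> P0 V U" using ar(2)
    proof (rule PrE)
      assume "r \<in> P0 S U"
      then obtain x y where xy: "x \<in> S" "y \<in> S" "r = tpair x y" by (rule P0E)
      have cx: "x \<in> carrier W" and cy: "y \<in> carrier W" using xy cS by auto
      have e: "g = tpair (iv v1 \<bullet> iv x \<bullet> iv (iv v1) \<bullet> iv (iv x)) (iv v2 \<bullet> iv y \<bullet> iv (iv v2) \<bullet> iv (iv y))"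
        using ar v xy c1 c2 cx cy by (simp add: gc tpair_inv tpair_mult)
      have u1: "iv v1 \<bullet> iv x \<bullet> iv (iv v1) \<bullet> iv (iv x) \<in> U" by (rule comm_VS[OF Vi[OF v(1)] Si[OF xy(1)]])
      have u2: "iv v2 \<bullet> iv y \<bullet> iv (iv v2) \<bullet> iv (iv y) \<in> U" by (rule comm_VS[OF Vi[OF v(2)] Si[OF xy(2)]])
      show "g \<in> P0 V U" unfolding e P0_tpair using u1 u2 U_V Um[OF u1 Ui[OF u2]] by blast
    next
      fix p assume "p \<in> P0 S U" "r = p \<bullet> sigma"
      then obtain x y where xy: "x \<in> S" "y \<in> S" "r = tpair x y \<bullet> sigma" by (auto elim: P0E)
      have cx: "x \<in> carrier W" and cy: "y \<in> carrier W" using xy cS by auto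
      let ?p = "iv v1 \<bullet> iv y \<bullet> v2 \<bullet> y" and ?q = "iv v2 \<bullet> iv x \<bullet> v1 \<bullet> x"
      have ir: "iv (tpair x y \<bullet> sigma) = sigma \<bullet> tpair (iv x) (iv y)"
        using cx cy tpair_carrier[OF cx cy] sigma_carrier by (simp add: W.inv_mult_group sigma_inv tpair_inv)
      have e: "g = tpair ?p ?q"
        using ar v xy c1 c2 cx cy by (simp add: gc tpair_inv ts ir)
      have k1: "iv v2 \<bullet> iv y \<bullet> iv (iv v2) \<bullet> iv (iv y) \<in> U" by (rule comm_VS[OF Vi[OF v(2)] Si[OF xy(2)]])
      have k2: "iv v1 \<bullet> iv x \<bullet> iv (iv v1) \<bullet> iv (iv x) \<in> U" by (rule comm_VS[OF Vi[OF v(1)] Si[OF xy(1)]])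
      have "(iv v1 \<bullet> v2) \<bullet> (iv v2 \<bullet> iv y \<bullet> iv (iv v2) \<bullet> iv (iv y)) \<in> V"
        by (rule Vm[OF Vm[OF Vi[OF v(1)] v(2)] U_V[THEN subsetD, OF k1]])
      hence pV: "?p \<in> V" using c1 c2 cy by (simp add: gs)
      have "(iv v2 \<bullet> v1) \<bullet> (iv v1 \<bullet> iv x \<bullet> iv (iv v1) \<bullet> iv (iv x)) \<in> V"
        by (rule Vm[OF Vm[OF Vi[OF v(2)] v(1)] U_V[THEN subsetD, OF k2]])
      hence qV: "?q \<in> V" using c1 c2 cx by (simp add: gs)
      let ?c1 = "iv y \<bullet> v2 \<bullet> iv (iv y) \<bullet> iv v2" and ?c2 = "iv x \<bullet> iv v1 \<bullet> iv (iv x) \<bullet> iv (iv v1)"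
      let ?d = "iv v1 \<bullet> v2"
      have m1: "?c1 \<in> U" by (rule comm_VS'[OF v(2) Si[OF xy(2)]])
      have m2: "?c2 \<in> U" by (rule comm_VS'[OF Vi[OF v(1)] Si[OF xy(1)]])
      have dV: "?d \<in> V" by (rule Vm[OF Vi[OF v(1)] v(2)])
      have "(iv v1 \<bullet> ?c1 \<bullet> v1) \<bullet> (?d \<bullet> ?c2 \<bullet> iv ?d) \<bullet> (?d \<bullet> ?d) \<in> U"
        by (rule Um[OF Um[OF U_conj2[OF s1 m1] U_conj[OF VS[OF dV] m2]] Vsq[OF dV]])
      moreover have "(iv v1 \<bullet> ?c1 \<bullet> v1) \<bullet> (?d \<bullet> ?c2 \<bullet> iv ?d) \<bullet> (?d \<bullet> ?d) = ?p \<bullet> iv ?q"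
        using c1 c2 cx cy by (simp add: gs)
      ultimately have "?p \<bullet> iv ?q \<in> U" by simp
      thus "g \<in> P0 V U" unfolding e P0_tpair using pV qV by blast
    qed
  qed
  hence "comm_subgroup W (prodset V V) R \<subseteq> P0 V U"
    unfolding comm_subgroup_def by (rule W.generate_subgroup_incl[OF _ P])
  thus ?thesis using eq by simp
qed

lemma VU_group: "group (W\<lparr>carrier := V\<rparr> Mod U)" by (rule normal.factorgroup_is_group[OF U_normal_V])

lemma VU_carrier: "carrier (W\<lparr>carrier := V\<rparr> Mod U) = {U #>\<^bsub>W\<^esub> v | v. v \<in> V}"
  by (simp add: FactGroup_def rcosets_upd)

lemma VU_mult: "v \<in> V \<Longrightarrow> w \<in> V \<Longrightarrow>
  (U #>\<^bsub>W\<^esub> v) \<otimes>\<^bsub>W\<lparr>carrier := V\<rparr> Mod U\<^esub> (U #>\<^bsub>W\<^esub> w) = U #>\<^bsub>W\<^esub> (v \<bullet> w)"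
  using normal.rcos_sum[OF U_normal_V, of v w] by (simp add: FactGroup_def rc_upd sm_upd)

lemma VU_comm: "comm_group (W\<lparr>carrier := V\<rparr> Mod U)"
proof (rule group.group_comm_groupI[OF VU_group])
  fix Z1 Z2 assume "Z1 \<in> carrier (W\<lparr>carrier := V\<rparr> Mod U)" "Z2 \<in> carrier (W\<lparr>carrier := V\<rparr> Mod U)"
  then obtain v w where v: "v \<in> V" "Z1 = U #>\<^bsub>W\<^esub> v" and w: "w \<in> V" "Z2 = U #>\<^bsub>W\<^esub> w"
    unfolding VU_carrier by blast
  have "U #>\<^bsub>W\<^esub> (v \<bullet> w) = U #>\<^bsub>W\<^esub> (w \<bullet> v)"
  proof (rule rcos_eqI[OF U_sub])
    show "v \<bullet> w \<in> carrier W" "w \<bullet> v \<in> carrier W" using v w cV by auto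
    have "w \<bullet> v \<bullet> iv w \<bullet> iv v \<in> U" by (rule comm_VS[OF w(1) VS[OF v(1)]])
    thus "w \<bullet> v \<bullet> iv (v \<bullet> w) \<in> U" using v w cV by (simp add: gs)
  qed
  thus "Z1 \<otimes>\<^bsub>W\<lparr>carrier := V\<rparr> Mod U\<^esub> Z2 = Z2 \<otimes>\<^bsub>W\<lparr>carrier := V\<rparr> Mod U\<^esub> Z1"
    using v w VU_mult by simp
qed

end



definition rep :: "'a set \<Rightarrow> 'a" where "rep Z = (SOME z. z \<in> Z)"
lemma rep_in: "z \<in> Z \<Longrightarrow> rep Z \<in> Z" unfolding rep_def by (rule someI)

lemma rcos_elem: "z \<in> H #>\<^bsub>W\<^esub> a \<Longrightarrow> \<exists>h\<in>H. z = h \<bullet> a" by (auto simp: r_coset_def)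

context th
begin

definition phi where
  "phi = (\<lambda>A. \<lambda>B \<in> carrier (W\<lparr>carrier := V\<rparr> Mod U). U #>\<^bsub>W\<^esub> (rep A \<bullet> rep B \<bullet> iv (rep A)))"

lemma wd: assumes t: "t \<in> T" and v: "v \<in> V" and t': "t' \<in> S #>\<^bsub>W\<^esub> t" and v': "v' \<in> U #>\<^bsub>W\<^esub> v"
  shows "U #>\<^bsub>W\<^esub> (t' \<bullet> v' \<bullet> iv t') = U #>\<^bsub>W\<^esub> (t \<bullet> v \<bullet> iv t)"
proof -
  obtain s where s: "s \<in> S" "t' = s \<bullet> t" using rcos_elem[OF t'] by blast
  obtain u where u: "u \<in> U" "v' = u \<bullet> v" using rcos_elem[OF v'] by blast
  have ct: "t \<in> carrier W" and cv: "v \<in> carrier W" and cs: "s \<in> carrier W" and cu: "u \<in> carrier W"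
    using t v s u cT cV cS cU by auto
  let ?w = "t \<bullet> v \<bullet> iv t"
  have m1: "s \<bullet> (t \<bullet> u \<bullet> iv t) \<bullet> iv s \<in> U" by (rule U_conj[OF s(1) TU1[OF t u(1)]])
  have m2: "s \<bullet> ?w \<bullet> iv s \<bullet> iv ?w \<in> U" by (rule comm_VS'[OF V_conjT[OF t v] s(1)])
  have "(s \<bullet> (t \<bullet> u \<bullet> iv t) \<bullet> iv s) \<bullet> (s \<bullet> ?w \<bullet> iv s \<bullet> iv ?w) \<in> U" by (rule Um[OF m1 m2])
  moreover have "(s \<bullet> (t \<bullet> u \<bullet> iv t) \<bullet> iv s) \<bullet> (s \<bullet> ?w \<bullet> iv s \<bullet> iv ?w) = (t' \<bullet> v' \<bullet> iv t') \<bullet> iv ?w"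
    using s u ct cv cs cu by (simp add: gs)
  ultimately have "(t' \<bullet> v' \<bullet> iv t') \<bullet> iv ?w \<in> U" by simp
  hence "U #>\<^bsub>W\<^esub> ?w = U #>\<^bsub>W\<^esub> (t' \<bullet> v' \<bullet> iv t')"
    using s u ct cv cs cu by (intro rcos_eqI[OF U_sub]) simp_all
  thus ?thesis by simp
qed

lemma phi_eq: assumes t: "t \<in> T" and v: "v \<in> V"
  shows "phi (S #>\<^bsub>W\<^esub> t) (U #>\<^bsub>W\<^esub> v) = U #>\<^bsub>W\<^esub> (t \<bullet> v \<bullet> iv t)"
proof -
  have E: "U #>\<^bsub>W\<^esub> v \<in> carrier (W\<lparr>carrier := V\<rparr> Mod U)" using v unfolding VU_carrier by blast
  have r1: "rep (S #>\<^bsub>W\<^esub> t) \<in> S #>\<^bsub>W\<^esub> t" by (rule rep_in[OF W.rcos_self[OF cT[OF t] S]])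
  have r2: "rep (U #>\<^bsub>W\<^esub> v) \<in> U #>\<^bsub>W\<^esub> v" by (rule rep_in[OF W.rcos_self[OF cV[OF v] U_sub]])
  show ?thesis unfolding phi_def using E wd[OF t v r1 r2] by simp
qed

abbreviation "E \<equiv> carrier (W\<lparr>carrier := V\<rparr> Mod U)"

lemma TS_group: "group (W\<lparr>carrier := T\<rparr> Mod S)" by (rule normal.factorgroup_is_group[OF S_normal_T])
lemma TS_carrier: "carrier (W\<lparr>carrier := T\<rparr> Mod S) = {S #>\<^bsub>W\<^esub> t | t. t \<in> T}"
  by (simp add: FactGroup_def rcosets_upd)
lemma TS_mult: "t \<in> T \<Longrightarrow> t' \<in> T \<Longrightarrow>
  (S #>\<^bsub>W\<^esub> t) \<otimes>\<^bsub>W\<lparr>carrier := T\<rparr> Mod S\<^esub> (S #>\<^bsub>W\<^esub> t') = S #>\<^bsub>W\<^esub> (t \<bullet> t')"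
  using normal.rcos_sum[OF S_normal_T, of t t'] by (simp add: FactGroup_def rc_upd sm_upd)

lemma phi_E: "t \<in> T \<Longrightarrow> B \<in> E \<Longrightarrow> phi (S #>\<^bsub>W\<^esub> t) B \<in> E"
proof -
  assume t: "t \<in> T" and B: "B \<in> E"
  then obtain v where v: "v \<in> V" "B = U #>\<^bsub>W\<^esub> v" unfolding VU_carrier by blast
  have "t \<bullet> v \<bullet> iv t \<in> V" by (rule V_conjT[OF t v(1)])
  thus ?thesis using phi_eq[OF t v(1)] v(2) unfolding VU_carrier by blast
qed

lemma phi_inv: "t \<in> T \<Longrightarrow> B \<in> E \<Longrightarrow> phi (S #>\<^bsub>W\<^esub> iv t) (phi (S #>\<^bsub>W\<^esub> t) B) = B"
proof -
  assume t: "t \<in> T" and B: "B \<in> E"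
  then obtain v where v: "v \<in> V" "B = U #>\<^bsub>W\<^esub> v" unfolding VU_carrier by blast
  have "phi (S #>\<^bsub>W\<^esub> iv t) (phi (S #>\<^bsub>W\<^esub> t) B) = U #>\<^bsub>W\<^esub> (iv t \<bullet> (t \<bullet> v \<bullet> iv t) \<bullet> iv (iv t))"
    using phi_eq[OF t v(1)] phi_eq[OF Ti[OF t] V_conjT[OF t v(1)]] v(2) by simp
  also have "iv t \<bullet> (t \<bullet> v \<bullet> iv t) \<bullet> iv (iv t) = v" using cT[OF t] cV[OF v(1)] by (simp add: gs)
  finally show ?thesis using v(2) by simp
qed

lemma phi_inv2: "t \<in> T \<Longrightarrow> B \<in> E \<Longrightarrow> phi (S #>\<^bsub>W\<^esub> t) (phi (S #>\<^bsub>W\<^esub> iv t) B) = B"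
  using phi_inv[OF Ti] cT by simp

lemma phi_Bij: assumes t: "t \<in> T" shows "phi (S #>\<^bsub>W\<^esub> t) \<in> Bij E"
proof -
  have "phi (S #>\<^bsub>W\<^esub> t) \<in> extensional E" unfolding phi_def by simp
  moreover have "bij_betw (phi (S #>\<^bsub>W\<^esub> t)) E E"
    by (rule bij_betw_byWitness[where f' = "phi (S #>\<^bsub>W\<^esub> iv t)"])
       (use phi_inv[OF t] phi_inv2[OF t] phi_E[OF t] phi_E[OF Ti[OF t]] in auto)
  ultimately show ?thesis unfolding Bij_def by blast
qed

lemma phi_out: "B \<notin> E \<Longrightarrow> phi A B = undefined" unfolding phi_def by simp

lemma phi_comp: assumes t: "t \<in> T" and t': "t' \<in> T"
  shows "phi (S #>\<^bsub>W\<^esub> (t \<bullet> t')) = compose E (phi (S #>\<^bsub>W\<^esub> t)) (phi (S #>\<^bsub>W\<^esub> t'))"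
proof
  fix B show "phi (S #>\<^bsub>W\<^esub> (t \<bullet> t')) B = compose E (phi (S #>\<^bsub>W\<^esub> t)) (phi (S #>\<^bsub>W\<^esub> t')) B"
  proof (cases "B \<in> E")
    case True
    then obtain v where v: "v \<in> V" "B = U #>\<^bsub>W\<^esub> v" unfolding VU_carrier by blast
    have "compose E (phi (S #>\<^bsub>W\<^esub> t)) (phi (S #>\<^bsub>W\<^esub> t')) B = U #>\<^bsub>W\<^esub> (t \<bullet> (t' \<bullet> v \<bullet> iv t') \<bullet> iv t)"
      using True v phi_eq[OF t' v(1)] phi_eq[OF t V_conjT[OF t' v(1)]] by (simp add: compose_def)
    also have "t \<bullet> (t' \<bullet> v \<bullet> iv t') \<bullet> iv t = (t \<bullet> t') \<bullet> v \<bullet> iv (t \<bullet> t')"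
      using cT[OF t] cT[OF t'] cV[OF v(1)] by (simp add: gs)
    also have "U #>\<^bsub>W\<^esub> \<dots> = phi (S #>\<^bsub>W\<^esub> (t \<bullet> t')) B" using phi_eq[OF Tm[OF t t'] v(1)] v(2) by simp
    finally show ?thesis by simp
  next
    case False thus ?thesis by (simp add: phi_out compose_def)
  qed
qed

lemma phi_hom: assumes t: "t \<in> T"
  shows "phi (S #>\<^bsub>W\<^esub> t) \<in> hom (W\<lparr>carrier := V\<rparr> Mod U) (W\<lparr>carrier := V\<rparr> Mod U)"
  unfolding hom_def
proof (intro CollectI conjI ballI)
  show "phi (S #>\<^bsub>W\<^esub> t) \<in> E \<rightarrow> E" using phi_E[OF t] by blast
next
  fix B1 B2 assume "B1 \<in> E" "B2 \<in> E"
  then obtain v w where v: "v \<in> V" "B1 = U #>\<^bsub>W\<^esub> v" and w: "w \<in> V" "B2 = U #>\<^bsub>W\<^esub> w"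
    unfolding VU_carrier by blast
  have "phi (S #>\<^bsub>W\<^esub> t) (B1 \<otimes>\<^bsub>W\<lparr>carrier := V\<rparr> Mod U\<^esub> B2) = U #>\<^bsub>W\<^esub> (t \<bullet> (v \<bullet> w) \<bullet> iv t)"
    using v w VU_mult phi_eq[OF t Vm[OF v(1) w(1)]] by simp
  also have "t \<bullet> (v \<bullet> w) \<bullet> iv t = (t \<bullet> v \<bullet> iv t) \<bullet> (t \<bullet> w \<bullet> iv t)"
    using cT[OF t] cV[OF v(1)] cV[OF w(1)] by (simp add: gs)
  also have "U #>\<^bsub>W\<^esub> \<dots> = phi (S #>\<^bsub>W\<^esub> t) B1 \<otimes>\<^bsub>W\<lparr>carrier := V\<rparr> Mod U\<^esub> phi (S #>\<^bsub>W\<^esub> t) B2"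
    using v w phi_eq[OF t v(1)] phi_eq[OF t w(1)] VU_mult[OF V_conjT[OF t v(1)] V_conjT[OF t w(1)]] by simp
  finally show "phi (S #>\<^bsub>W\<^esub> t) (B1 \<otimes>\<^bsub>W\<lparr>carrier := V\<rparr> Mod U\<^esub> B2) =
      phi (S #>\<^bsub>W\<^esub> t) B1 \<otimes>\<^bsub>W\<lparr>carrier := V\<rparr> Mod U\<^esub> phi (S #>\<^bsub>W\<^esub> t) B2" .
qed

lemma action: "group_action (W\<lparr>carrier := T\<rparr> Mod S) E phi"
  unfolding group_action_def group_hom_def group_hom_axioms_def
proof (intro conjI)
  show "group (W\<lparr>carrier := T\<rparr> Mod S)" by (rule TS_group)
  show "group (BijGroup E)" by (rule group_BijGroup)
  show "phi \<in> hom (W\<lparr>carrier := T\<rparr> Mod S) (BijGroup E)"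
    unfolding hom_def
  proof (intro CollectI conjI ballI)
    show "phi \<in> carrier (W\<lparr>carrier := T\<rparr> Mod S) \<rightarrow> carrier (BijGroup E)"
      unfolding TS_carrier BijGroup_def using phi_Bij by auto
  next
    fix A1 A2 assume "A1 \<in> carrier (W\<lparr>carrier := T\<rparr> Mod S)" "A2 \<in> carrier (W\<lparr>carrier := T\<rparr> Mod S)"
    then obtain t t' where t: "t \<in> T" "A1 = S #>\<^bsub>W\<^esub> t" and t': "t' \<in> T" "A2 = S #>\<^bsub>W\<^esub> t'"
      unfolding TS_carrier by blast
    show "phi (A1 \<otimes>\<^bsub>W\<lparr>carrier := T\<rparr> Mod S\<^esub> A2) = phi A1 \<otimes>\<^bsub>BijGroup E\<^esub> phi A2"
      using t t' TS_mult phi_comp[OF t(1) t'(1)] phi_Bij[OF t(1)] phi_Bij[OF t'(1)]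
      by (simp add: BijGroup_def)
  qed
qed

end



context th
begin

abbreviation "Q \<equiv> W\<lparr>carrier := N\<rparr> Mod R"

lemma R_normal_N: "normal R (W\<lparr>carrier := N\<rparr>)" by (rule W.subgroup_in_normalizer[OF R_sub])
lemma Q_group: "group Q" by (rule normal.factorgroup_is_group[OF R_normal_N])
lemma Q_carrier: "carrier Q = {R #>\<^bsub>W\<^esub> n | n. n \<in> N}" by (simp add: FactGroup_def rcosets_upd)
lemma Q_mult: "n \<in> N \<Longrightarrow> m \<in> N \<Longrightarrow> (R #>\<^bsub>W\<^esub> n) \<otimes>\<^bsub>Q\<^esub> (R #>\<^bsub>W\<^esub> m) = R #>\<^bsub>W\<^esub> (n \<bullet> m)"
  using normal.rcos_sum[OF R_normal_N, of n m] by (simp add: FactGroup_def rc_upd sm_upd)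
lemma cN: "n \<in> N \<Longrightarrow> n \<in> carrier W" using subgroup.mem_carrier[OF N_sub] .

lemma T1: "\<one>\<^bsub>W\<^esub> \<in> T" by (rule subgroup.one_closed[OF T_sub])
lemma V1: "\<one>\<^bsub>W\<^esub> \<in> V" by (rule subgroup.one_closed[OF V_sub])

lemma tA_N: "v \<in> V \<Longrightarrow> tpair \<one>\<^bsub>W\<^esub> v \<in> N"
  unfolding N_eq using T1 V_T Vi cV by (intro Pr_I1) (auto simp: P0_tpair W_l_one)
lemma tB_N: "t \<in> T \<Longrightarrow> tpair t t \<in> N"
  unfolding N_eq using V1 cT by (intro Pr_I1) (auto simp: P0_tpair)

definition "fA = (\<lambda>v. R #>\<^bsub>W\<^esub> tpair \<one>\<^bsub>W\<^esub> v)"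
definition "fB = (\<lambda>t. R #>\<^bsub>W\<^esub> tpair t t)"

lemma fA_hom: "fA \<in> hom (W\<lparr>carrier := V\<rparr>) Q"
  unfolding hom_def
proof (intro CollectI conjI ballI)
  show "fA \<in> carrier (W\<lparr>carrier := V\<rparr>) \<rightarrow> carrier Q" unfolding Q_carrier fA_def using tA_N by auto
next
  fix v w assume "v \<in> carrier (W\<lparr>carrier := V\<rparr>)" "w \<in> carrier (W\<lparr>carrier := V\<rparr>)"
  hence v: "v \<in> V" and w: "w \<in> V" by auto
  show "fA (v \<otimes>\<^bsub>W\<lparr>carrier := V\<rparr>\<^esub> w) = fA v \<otimes>\<^bsub>Q\<^esub> fA w"
    unfolding fA_def using Q_mult[OF tA_N[OF v] tA_N[OF w]] by (simp add: tpair_mult W_l_one)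
qed

lemma fB_hom: "fB \<in> hom (W\<lparr>carrier := T\<rparr>) Q"
  unfolding hom_def
proof (intro CollectI conjI ballI)
  show "fB \<in> carrier (W\<lparr>carrier := T\<rparr>) \<rightarrow> carrier Q" unfolding Q_carrier fB_def using tB_N by auto
next
  fix v w assume "v \<in> carrier (W\<lparr>carrier := T\<rparr>)" "w \<in> carrier (W\<lparr>carrier := T\<rparr>)"
  hence v: "v \<in> T" and w: "w \<in> T" by auto
  show "fB (v \<otimes>\<^bsub>W\<lparr>carrier := T\<rparr>\<^esub> w) = fB v \<otimes>\<^bsub>Q\<^esub> fB w"
    unfolding fB_def using Q_mult[OF tB_N[OF v] tB_N[OF w]] by (simp add: tpair_mult)
qed

lemma gV: "group (W\<lparr>carrier := V\<rparr>)" by (rule W.subgroup_imp_group[OF V_sub])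
lemma gT: "group (W\<lparr>carrier := T\<rparr>)" by (rule W.subgroup_imp_group[OF T_sub])

lemma ghA: "group_hom (W\<lparr>carrier := V\<rparr>) Q fA"
  unfolding group_hom_def group_hom_axioms_def using gV Q_group fA_hom by blast
lemma ghB: "group_hom (W\<lparr>carrier := T\<rparr>) Q fB"
  unfolding group_hom_def group_hom_axioms_def using gT Q_group fB_hom by blast

lemma A_sub: "subgroup (fA ` V) Q" using group_hom.img_is_subgroup[OF ghA] by simp
lemma B_sub: "subgroup (fB ` T) Q" using group_hom.img_is_subgroup[OF ghB] by simp

lemma fA_one: "v \<in> V \<Longrightarrow> fA v = R \<longleftrightarrow> v \<in> U"
proof -
  assume v: "v \<in> V"
  have cv: "v \<in> carrier W" using cV[OF v] .
  have "fA v = R \<longleftrightarrow> tpair \<one>\<^bsub>W\<^esub> v \<in> R"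
    unfolding fA_def by (rule rcos_one_iff[OF R_sub cN[OF tA_N[OF v]]])
  also have "\<dots> \<longleftrightarrow> iv v \<in> U" using S1 VS[OF v] by (simp add: Pr_tpair W_l_one)
  also have "\<dots> \<longleftrightarrow> v \<in> U" using Ui[of "iv v"] Ui[of v] cv by auto
  finally show ?thesis .
qed

lemma fB_one: "t \<in> T \<Longrightarrow> fB t = R \<longleftrightarrow> t \<in> S"
proof -
  assume t: "t \<in> T"
  have "fB t = R \<longleftrightarrow> tpair t t \<in> R"
    unfolding fB_def by (rule rcos_one_iff[OF R_sub cN[OF tB_N[OF t]]])
  also have "\<dots> \<longleftrightarrow> t \<in> S" using U1 cT[OF t] by (simp add: Pr_tpair)
  finally show ?thesis .
qed

lemma A_iso: "Q\<lparr>carrier := fA ` V\<rparr> \<cong> W\<lparr>carrier := V\<rparr> Mod U"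
proof -
  have g: "group (Q\<lparr>carrier := fA ` V\<rparr>)" by (rule subgroup.subgroup_is_group[OF A_sub Q_group])
  have h: "fA \<in> hom (W\<lparr>carrier := V\<rparr>) (Q\<lparr>carrier := fA ` V\<rparr>)"
    using fA_hom unfolding hom_def by auto
  have gh: "group_hom (W\<lparr>carrier := V\<rparr>) (Q\<lparr>carrier := fA ` V\<rparr>) fA"
    unfolding group_hom_def group_hom_axioms_def using gV g h by blast
  have k: "kernel (W\<lparr>carrier := V\<rparr>) (Q\<lparr>carrier := fA ` V\<rparr>) fA = U"
    unfolding kernel_def using fA_one U_V by auto
  have "W\<lparr>carrier := V\<rparr> Mod U \<cong> Q\<lparr>carrier := fA ` V\<rparr>"
    using group_hom.FactGroup_iso[OF gh] k by simp
  thus ?thesis by (rule group.iso_sym[OF VU_group])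
qed

lemma B_iso: "Q\<lparr>carrier := fB ` T\<rparr> \<cong> W\<lparr>carrier := T\<rparr> Mod S"
proof -
  have g: "group (Q\<lparr>carrier := fB ` T\<rparr>)" by (rule subgroup.subgroup_is_group[OF B_sub Q_group])
  have h: "fB \<in> hom (W\<lparr>carrier := T\<rparr>) (Q\<lparr>carrier := fB ` T\<rparr>)"
    using fB_hom unfolding hom_def by auto
  have gh: "group_hom (W\<lparr>carrier := T\<rparr>) (Q\<lparr>carrier := fB ` T\<rparr>) fB"
    unfolding group_hom_def group_hom_axioms_def using gT g h by blast
  have k: "kernel (W\<lparr>carrier := T\<rparr>) (Q\<lparr>carrier := fB ` T\<rparr>) fB = S"
    unfolding kernel_def using fB_one S_T by auto
  have "W\<lparr>carrier := T\<rparr> Mod S \<cong> Q\<lparr>carrier := fB ` T\<rparr>"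
    using group_hom.FactGroup_iso[OF gh] k by simp
  thus ?thesis by (rule group.iso_sym[OF TS_group])
qed

lemma AB: "fA ` V <#>\<^bsub>Q\<^esub> fB ` T = carrier Q"
proof
  show "fA ` V <#>\<^bsub>Q\<^esub> fB ` T \<subseteq> carrier Q"
    using subgroup.subset[OF A_sub] subgroup.subset[OF B_sub] monoid.m_closed[OF group.is_monoid[OF Q_group]]
    unfolding set_mult_def by blast
  show "carrier Q \<subseteq> fA ` V <#>\<^bsub>Q\<^esub> fB ` T"
  proof
    fix Z assume "Z \<in> carrier Q"
    then obtain n where n: "n \<in> N" "Z = R #>\<^bsub>W\<^esub> n" unfolding Q_carrier by blast
    have key: "R #>\<^bsub>W\<^esub> p \<in> fA ` V <#>\<^bsub>Q\<^esub> fB ` T" if p: "p \<in> P0 T V" for p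
    proof -
      obtain a b where ab: "a \<in> T" "b \<in> T" "a \<bullet> iv b \<in> V" "p = tpair a b" using p by (rule P0E)
      have ca: "a \<in> carrier W" and cb: "b \<in> carrier W" using ab cT by auto
      have wV: "b \<bullet> iv a \<in> V" using Vi[OF ab(3)] ca cb by (simp add: gs)
      have "fA (b \<bullet> iv a) \<otimes>\<^bsub>Q\<^esub> fB a = R #>\<^bsub>W\<^esub> (tpair \<one>\<^bsub>W\<^esub> (b \<bullet> iv a) \<bullet> tpair a a)"
        unfolding fA_def fB_def by (rule Q_mult[OF tA_N[OF wV] tB_N[OF ab(1)]])
      also have "tpair \<one>\<^bsub>W\<^esub> (b \<bullet> iv a) \<bullet> tpair a a = p" using ab ca cb by (simp add: tpair_mult gs)
      finally have "R #>\<^bsub>W\<^esub> p = fA (b \<bullet> iv a) \<otimes>\<^bsub>Q\<^esub> fB a" by simp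
      moreover have "fA (b \<bullet> iv a) \<in> fA ` V" "fB a \<in> fB ` T" using wV ab(1) by auto
      ultimately show ?thesis unfolding set_mult_def by blast
    qed
    have "n \<in> Pr T V" using n(1) N_eq by simp
    thus "Z \<in> fA ` V <#>\<^bsub>Q\<^esub> fB ` T"
    proof (rule PrE)
      assume "n \<in> P0 T V" thus ?thesis using key n(2) by simp
    next
      fix p assume p: "p \<in> P0 T V" and np: "n = p \<bullet> sigma"
      have pN: "p \<in> N" using Pr_I1[OF p] N_eq by simp
      have "R #>\<^bsub>W\<^esub> p = R #>\<^bsub>W\<^esub> n"
      proof (rule rcos_eqI[OF R_sub cN[OF pN] cN[OF n(1)]])
        show "n \<bullet> iv p \<in> R" using pN N_iff sigma_R np by blast
      qed
      thus ?thesis using key[OF p] n(2) by simp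
    qed
  qed
qed

end

theorem theorem4p4:
  fixes U S :: "(bool list \<Rightarrow> bool list) set"
  assumes "subgroup S W"
    and "normal U (W\<lparr>carrier := S\<rparr>)"
  defines "R \<equiv> prodset U U <#>\<^bsub>W\<^esub> generate W {sigma} <#>\<^bsub>W\<^esub> diagset S"
    and "V \<equiv> Omega W S U"
    and "T \<equiv> normalizer W U \<inter> normalizer W S"
  shows "(normalizer W R = prodset V V <#>\<^bsub>W\<^esub> generate W {sigma} <#>\<^bsub>W\<^esub> diagset T)
    \<and> normal V (W\<lparr>carrier := T\<rparr>)
    \<and> comm_subgroup W (prodset V V) R \<subseteq> prodset U U <#>\<^bsub>W\<^esub> diagset V
    \<and> comm_group (W\<lparr>carrier := V\<rparr> Mod U)
         \<and> (\<exists>\<phi>. group_action (W\<lparr>carrier := T\<rparr> Mod S) (carrier (W\<lparr>carrier := V\<rparr> Mod U)) \<phi>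
             \<and> (\<forall>g \<in> carrier (W\<lparr>carrier := T\<rparr> Mod S).
                   \<phi> g \<in> hom (W\<lparr>carrier := V\<rparr> Mod U) (W\<lparr>carrier := V\<rparr> Mod U))
             \<and> (\<forall>t \<in> T. \<forall>v \<in> V. \<phi> (S #>\<^bsub>W\<^esub> t) (U #>\<^bsub>W\<^esub> v)
                   = U #>\<^bsub>W\<^esub> (t \<otimes>\<^bsub>W\<^esub> v \<otimes>\<^bsub>W\<^esub> inv\<^bsub>W\<^esub> t)))
    \<and> (\<exists>A B. subgroup A (W\<lparr>carrier := normalizer W R\<rparr> Mod R)
           \<and> subgroup B (W\<lparr>carrier := normalizer W R\<rparr> Mod R)
           \<and> A <#>\<^bsub>W\<lparr>carrier := normalizer W R\<rparr> Mod R\<^esub> B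
               = carrier (W\<lparr>carrier := normalizer W R\<rparr> Mod R)
           \<and> (W\<lparr>carrier := normalizer W R\<rparr> Mod R)\<lparr>carrier := A\<rparr> \<cong> (W\<lparr>carrier := V\<rparr> Mod U)
           \<and> (W\<lparr>carrier := normalizer W R\<rparr> Mod R)\<lparr>carrier := B\<rparr> \<cong> (W\<lparr>carrier := T\<rparr> Mod S))"
proof -
  interpret th U S using assms(1,2) by (rule th.intro)
  have R: "R = Pr S U" unfolding R_def by (rule pr_prod[OF U_sub assms(1) US])
  have c1: "normalizer W R = prodset V V <#>\<^bsub>W\<^esub> generate W {sigma} <#>\<^bsub>W\<^esub> diagset T"
    unfolding R V_def T_def N_eq by (rule pr_prod[OF V_sub T_sub V_T, symmetric])
  have c5: "\<exists>\<phi>. group_action (W\<lparr>carrier := T\<rparr> Mod S) (carrier (W\<lparr>carrier := V\<rparr> Mod U)) \<phi>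
             \<and> (\<forall>g \<in> carrier (W\<lparr>carrier := T\<rparr> Mod S).
                   \<phi> g \<in> hom (W\<lparr>carrier := V\<rparr> Mod U) (W\<lparr>carrier := V\<rparr> Mod U))
             \<and> (\<forall>t \<in> T. \<forall>v \<in> V. \<phi> (S #>\<^bsub>W\<^esub> t) (U #>\<^bsub>W\<^esub> v)
                   = U #>\<^bsub>W\<^esub> (t \<otimes>\<^bsub>W\<^esub> v \<otimes>\<^bsub>W\<^esub> inv\<^bsub>W\<^esub> t))"
    unfolding V_def T_def
    using action phi_hom phi_eq unfolding TS_carrier by blast
  have c6: "\<exists>A B. subgroup A (W\<lparr>carrier := normalizer W R\<rparr> Mod R)
           \<and> subgroup B (W\<lparr>carrier := normalizer W R\<rparr> Mod R)
           \<and> A <#>\<^bsub>W\<lparr>carrier := normalizer W R\<rparr> Mod R\<^esub> B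
               = carrier (W\<lparr>carrier := normalizer W R\<rparr> Mod R)
           \<and> (W\<lparr>carrier := normalizer W R\<rparr> Mod R)\<lparr>carrier := A\<rparr> \<cong> (W\<lparr>carrier := V\<rparr> Mod U)
           \<and> (W\<lparr>carrier := normalizer W R\<rparr> Mod R)\<lparr>carrier := B\<rparr> \<cong> (W\<lparr>carrier := T\<rparr> Mod S)"
    unfolding R V_def T_def using A_sub B_sub AB A_iso B_iso by blast
  show ?thesis using c1 V_normal_T comm_part VU_comm c5 c6 unfolding R V_def T_def by blast
qed

end
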